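(* Let $N\ge2$, $m=[N/2]$, $\lambda=(\lambda_1,\dots,\lambda_N)\in\mathbb{C}^N$ and $\kappa^\pm=(\kappa^\pm_1,\dots,\kappa^\pm_m)\in(0,\infty)^m$. For $j=1,\dots,m$ let $\alpha^\pm_j=e_{2j-1}\pm e_{2j}$ and let $\tau^\pm_j$ be the orthogonal projection onto $(\alpha_j^\pm)^\perp$, $\tau^\pm_jx=x-\frac{\langle x,\alpha^\pm_j\rangle}{2}\alpha^\pm_j$. For $\xi\in\mathbb{R}^N$ define $$(T_\xi f)(x)=\partial_\xi f(x)+\sum_{j=1}^m\Big(\kappa^-_j\langle\alpha^-_j,\xi\rangle\frac{f(x)-f(\tau^-_jx)}{\langle x,\alpha^-_j\rangle}+\kappa^+_j\langle\alpha^+_j,\xi\rangle\frac{f(x)-f(\tau^+_jx)}{\langle x,\alpha^+_j\rangle}\Big),$$ extended complex-linearly to $\xi\in\mathbb{C}^N$. Let $h(0,x)=x-\sum_{j=1}^m\sum_{\pm}\frac{\langle x,\alpha^\pm_j\rangle}{2}\alpha^\pm_j$. Then the problem $$T_\xi f=i\langle\lambda,\xi\rangle f\ \ \text{for all }\xi\in\mathbb{C}^N,\qquad f(0)=1,$$ has a unique analytic solution, given by $$M_\kappa(\lambda,x)=e^{i\langle\lambda,h(0,x)\rangle}\prod_{j=1}^m M_{\kappa^-_j}\Big(\tfrac{i}{2}(\lambda_{2j-1}-\lambda_{2j})(x_{2j-1}-x_{2j})\Big)\,M_{\kappa^+_j}\Big(\tfrac{i}{2}(\lambda_{2j-1}+\lambda_{2j})(x_{2j-1}+x_{2j})\Big),$$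 where $M_{c}(z)=M(1,c+1;z)=\sum_{n\ge0}\frac{z^n}{(c+1)_n}$.
   Context: $e_1,\dots,e_N$ is the standard basis of $\mathbb{R}^N$, $\langle\cdot,\cdot\rangle$ the (bilinear) standard pairing, $\partial_\xi$ the directional derivative, $[N/2]$ the integer part, $(a)_n=\Gamma(a+n)/\Gamma(a)$. For analytic $f$ the difference quotients are understood as their analytic extensions across the hyperplanes $\langle x,\alpha^\pm_j\rangle=0$. The vectors $\alpha^\pm_j$ form a positive orthogonal subsystem of the root system $B_N=\{\pm e_i\pm e_j\ (i<j),\ \pm e_i\}$. *)

theory Defs
  imports "HOL-Analysis.Analysis"
begin

text \<open>Coordinates: \<open>idx :: nat \<Rightarrow> 'n\<close> enumerates the coordinates of \<open>real ^ 'n\<close>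
  as \<open>1..N\<close>; the standard basis vector \<open>e_k\<close> is \<open>axis (idx k) 1\<close>.\<close>

definition ebas :: "(nat \<Rightarrow> 'n::finite) \<Rightarrow> nat \<Rightarrow> real ^ 'n" where
  "ebas idx k = axis (idx k) 1"

definition alpha_minus :: "(nat \<Rightarrow> 'n::finite) \<Rightarrow> nat \<Rightarrow> real ^ 'n" where
  "alpha_minus idx j = ebas idx (2*j - 1) - ebas idx (2*j)"

definition alpha_plus :: "(nat \<Rightarrow> 'n::finite) \<Rightarrow> nat \<Rightarrow> real ^ 'n" where
  "alpha_plus idx j = ebas idx (2*j - 1) + ebas idx (2*j)"

text \<open>Orthogonal projection onto the hyperplane orthogonal to \<open>a\<close> (\<open>|a|^2 = 2\<close>).\<close>
definition tau :: "real ^ 'n \<Rightarrow> real ^ 'n \<Rightarrow> real ^ 'n" where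
  "tau a x = x - (inner x a / 2) *\<^sub>R a"

definition real_analytic_on :: "(real ^ 'n::finite \<Rightarrow> complex) \<Rightarrow> (real ^ 'n) set \<Rightarrow> bool" where
  "real_analytic_on f S \<longleftrightarrow>
     (\<forall>a\<in>S. \<exists>r>0. \<exists>c :: ('n \<Rightarrow> nat) \<Rightarrow> complex.
        \<forall>x. dist x a < r \<longrightarrow>
          ((\<lambda>\<alpha>. c \<alpha> * complex_of_real (\<Prod>i\<in>UNIV. (x $ i - a $ i) ^ \<alpha> i)) has_sum f x) UNIV)"

definition dirderiv :: "(real ^ 'n::finite \<Rightarrow> complex) \<Rightarrow> real ^ 'n \<Rightarrow> real ^ 'n \<Rightarrow> complex" where
  "dirderiv f \<xi> x = vector_derivative (\<lambda>t::real. f (x + t *\<^sub>R \<xi>)) (at 0)"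

definition diffquot :: "(real ^ 'n::finite \<Rightarrow> complex) \<Rightarrow> real ^ 'n \<Rightarrow> real ^ 'n \<Rightarrow> complex" where
  "diffquot f a x = (f x - f (tau a x)) / complex_of_real (inner x a)"

definition T_real :: "(nat \<Rightarrow> 'n::finite) \<Rightarrow> nat \<Rightarrow> (nat \<Rightarrow> real) \<Rightarrow> (nat \<Rightarrow> real)
    \<Rightarrow> (real ^ 'n \<Rightarrow> complex) \<Rightarrow> real ^ 'n \<Rightarrow> real ^ 'n \<Rightarrow> complex" where
  "T_real idx N km kp f \<xi> x =
     dirderiv f \<xi> x +
     (\<Sum>j=1..N div 2.
        complex_of_real (km j * inner (alpha_minus idx j) \<xi>) * diffquot f (alpha_minus idx j) x
      + complex_of_real (kp j * inner (alpha_plus idx j) \<xi>) * diffquot f (alpha_plus idx j) x)"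

definition T_cplx :: "(nat \<Rightarrow> 'n::finite) \<Rightarrow> nat \<Rightarrow> (nat \<Rightarrow> real) \<Rightarrow> (nat \<Rightarrow> real)
    \<Rightarrow> (real ^ 'n \<Rightarrow> complex) \<Rightarrow> complex ^ 'n \<Rightarrow> real ^ 'n \<Rightarrow> complex" where
  "T_cplx idx N km kp f \<xi> x =
     T_real idx N km kp f (\<chi> i. Re (\<xi> $ i)) x + \<i> * T_real idx N km kp f (\<chi> i. Im (\<xi> $ i)) x"

definition cpair :: "complex ^ 'n::finite \<Rightarrow> complex ^ 'n \<Rightarrow> complex" where
  "cpair u v = (\<Sum>i\<in>UNIV. u $ i * v $ i)"

definition rpair :: "complex ^ 'n::finite \<Rightarrow> real ^ 'n \<Rightarrow> complex" where
  "rpair u y = (\<Sum>i\<in>UNIV. u $ i * complex_of_real (y $ i))"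

definition h0 :: "(nat \<Rightarrow> 'n::finite) \<Rightarrow> nat \<Rightarrow> real ^ 'n \<Rightarrow> real ^ 'n" where
  "h0 idx N x = x - (\<Sum>j=1..N div 2.
        (inner x (alpha_minus idx j) / 2) *\<^sub>R alpha_minus idx j
      + (inner x (alpha_plus idx j) / 2) *\<^sub>R alpha_plus idx j)"

definition Mconf :: "real \<Rightarrow> complex \<Rightarrow> complex" where
  "Mconf c z = (\<Sum>n. z ^ n / pochhammer (complex_of_real c + 1) n)"

definition Mkappa :: "(nat \<Rightarrow> 'n::finite) \<Rightarrow> nat \<Rightarrow> (nat \<Rightarrow> real) \<Rightarrow> (nat \<Rightarrow> real)
    \<Rightarrow> complex ^ 'n \<Rightarrow> real ^ 'n \<Rightarrow> complex" where
  "Mkappa idx N km kp lam x =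
     exp (\<i> * rpair lam (h0 idx N x)) *
     (\<Prod>j=1..N div 2.
        Mconf (km j) (\<i> / 2 * (lam $ idx (2*j-1) - lam $ idx (2*j))
                      * complex_of_real (x $ idx (2*j-1) - x $ idx (2*j)))
      * Mconf (kp j) (\<i> / 2 * (lam $ idx (2*j-1) + lam $ idx (2*j))
                      * complex_of_real (x $ idx (2*j-1) + x $ idx (2*j))))"

text \<open>Eigenvalue problem, required at every point off the hyperplanes
  \<open>\<langle>x,\<alpha>^\<pm>_j\<rangle> = 0\<close> (for analytic \<open>f\<close> this is equivalent to the equation on all
  of \<open>\<real>^N\<close> with the difference quotients analytically extended).\<close>
definition solves_eigen :: "(nat \<Rightarrow> 'n::finite) \<Rightarrow> nat \<Rightarrow> (nat \<Rightarrow> real) \<Rightarrow> (nat \<Rightarrow> real)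
    \<Rightarrow> complex ^ 'n \<Rightarrow> (real ^ 'n \<Rightarrow> complex) \<Rightarrow> bool" where
  "solves_eigen idx N km kp lam f \<longleftrightarrow>
     (\<forall>\<xi> :: complex ^ 'n. \<forall>x :: real ^ 'n.
        (\<forall>j\<in>{1..N div 2}. inner x (alpha_minus idx j) \<noteq> 0 \<and> inner x (alpha_plus idx j) \<noteq> 0)
        \<longrightarrow> T_cplx idx N km kp f \<xi> x = \<i> * cpair lam \<xi> * f x)"

end

theory Submission
  imports Defs "HOL-Complex_Analysis.Cauchy_Integral_Formula"
begin

definition pc :: "real \<Rightarrow> nat \<Rightarrow> complex" where
  "pc c n = pochhammer (complex_of_real c + 1) n"

lemma pc_real: "pc c n = complex_of_real (pochhammer (c+1) n)"
  unfolding pc_def by (metis of_real_1 of_real_add pochhammer_of_real)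

lemma poch_ge_fact: "(c::real) \<ge> 0 \<Longrightarrow> pochhammer (c+1) n \<ge> fact n"
proof (induction n)
  case 0 then show ?case by simp
next
  case (Suc n)
  have "fact (Suc n) = fact n * (1 + real n)" by (simp add: algebra_simps)
  also have "\<dots> \<le> pochhammer (c+1) n * (c + 1 + real n)"
    using Suc by (intro mult_mono) (auto intro: order_trans[OF fact_ge_zero])
  finally show ?case by (simp add: pochhammer_Suc)
qed

lemma norm_pc_ge: "c \<ge> 0 \<Longrightarrow> norm (pc c n) \<ge> fact n"
  using poch_ge_fact[of c n] by (simp add: pc_real)

lemma pc_nz: "c \<ge> 0 \<Longrightarrow> pc c n \<noteq> 0"
  using norm_pc_ge[of c n] by (metis fact_gt_zero norm_zero not_le)

lemma pc_Suc: "pc c (Suc n) = pc c n * (of_real c + 1 + of_nat n)"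
  unfolding pc_def by (simp add: pochhammer_Suc)

lemma Mconf_alt: "Mconf c z = (\<Sum>n. inverse (pc c n) * z ^ n)"
  unfolding Mconf_def pc_def by (simp add: field_simps)

lemma summable_Mconf: assumes "c \<ge> 0" shows "summable (\<lambda>n. inverse (pc c n) * z ^ n)"
proof (rule summable_comparison_test[of _ "\<lambda>n. norm z ^ n / fact n"])
  show "\<exists>N. \<forall>n\<ge>N. norm (inverse (pc c n) * z ^ n) \<le> norm z ^ n / fact n"
  proof (intro exI allI impI)
    fix n
    have "norm (inverse (pc c n) * z ^ n) = norm z ^ n / norm (pc c n)"
      by (simp add: norm_mult norm_inverse norm_power divide_inverse)
    also have "\<dots> \<le> norm z ^ n / fact n"
    proof (rule divide_left_mono)
      have f: "(0::real) < fact n" by simp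
      then have "0 < norm (pc c n)" using norm_pc_ge[OF assms, of n] by linarith
      then show "0 < norm (pc c n) * fact n" using f by simp
    qed (use norm_pc_ge[OF assms, of n] in auto)
    finally show "norm (inverse (pc c n) * z ^ n) \<le> norm z ^ n / fact n" .
  qed
  show "summable (\<lambda>n. norm z ^ n / fact n)" using summable_exp[of "norm z"]
    by (simp add: divide_inverse mult.commute)
qed

lemma summable_Mconf_norm: assumes "c \<ge> 0" shows "summable (\<lambda>n. norm (inverse (pc c n) * z ^ n))"
  using powser_insidea[OF summable_Mconf[OF assms, of "of_real (norm z + 1)"], of z] by simp

definition Mder :: "real \<Rightarrow> complex \<Rightarrow> complex" where
  "Mder c z = (\<Sum>n. diffs (\<lambda>n. inverse (pc c n)) n * z ^ n)"

lemma Mconf_deriv: assumes "c \<ge> 0" shows "(Mconf c has_field_derivative Mder c z) (at z)"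
  unfolding Mconf_alt[abs_def] Mder_def
  by (rule termdiffs_strong_converges_everywhere) (rule summable_Mconf[OF assms])

lemma Mconf_0: "Mconf c 0 = 1"
  unfolding Mconf_alt using powser_zero[of "\<lambda>n. inverse (pc c n)"] by (simp add: pc_def)

lemma Mconf_ident: assumes "c \<ge> 0"
  shows "z * Mder c z + of_real c * (Mconf c z - 1) = z * Mconf c z"
proof -
  let ?a = "\<lambda>n. inverse (pc c n)"
  have s: "summable (\<lambda>n. ?a n * z ^ n)" by (rule summable_Mconf[OF assms])
  have sd: "summable (\<lambda>n. diffs ?a n * z ^ n)"
    by (rule termdiff_converges_all) (rule summable_Mconf[OF assms])
  have e1: "z * Mder c z = (\<Sum>n. of_nat (Suc n) * ?a (Suc n) * z ^ Suc n)"
    unfolding Mder_def diffs_def using suminf_mult[OF sd[unfolded diffs_def], of z]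
    by (simp add: algebra_simps)
  have e2: "Mconf c z - 1 = (\<Sum>n. ?a (Suc n) * z ^ Suc n)"
    unfolding Mconf_alt using suminf_split_head[OF s] by (simp add: pc_def)
  have s2: "summable (\<lambda>n. ?a (Suc n) * z ^ Suc n)" using s summable_Suc_iff[of "\<lambda>n. ?a n * z ^ n"] by simp
  have s1: "summable (\<lambda>n. of_nat (Suc n) * ?a (Suc n) * z ^ Suc n)"
    using summable_mult[OF sd[unfolded diffs_def], of z] by (simp add: algebra_simps)
  have e3: "z * Mconf c z = (\<Sum>n. ?a n * z ^ Suc n)"
    unfolding Mconf_alt using suminf_mult[OF s, of z] by (simp add: algebra_simps)
  have key: "of_nat (Suc n) * ?a (Suc n) * z ^ Suc n + of_real c * (?a (Suc n) * z ^ Suc n)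
      = ?a n * z ^ Suc n" for n
  proof -
    have nz: "pc c n \<noteq> 0" "of_real c + 1 + of_nat n \<noteq> (0::complex)"
      using pc_nz[OF assms] pc_Suc[of c n] pc_nz[OF assms, of "Suc n"] by auto
    have q: "of_nat (Suc n) + of_real c = of_real c + 1 + (of_nat n::complex)" by simp
    have "of_nat (Suc n) * ?a (Suc n) * z ^ Suc n + of_real c * (?a (Suc n) * z ^ Suc n)
        = (of_nat (Suc n) + of_real c) * inverse (pc c n * (of_real c + 1 + of_nat n)) * z ^ Suc n"
      unfolding pc_Suc by (simp add: algebra_simps)
    also have "\<dots> = ?a n * z ^ Suc n" unfolding q using nz
      by (simp add: inverse_mult_distrib mult.assoc mult.left_commute[of "of_real c + 1 + of_nat n"])
    finally show ?thesis .
  qed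
  have "z * Mder c z + of_real c * (Mconf c z - 1)
     = (\<Sum>n. of_nat (Suc n) * ?a (Suc n) * z ^ Suc n + of_real c * (?a (Suc n) * z ^ Suc n))"
    unfolding e1 e2 using suminf_add[OF s1 summable_mult[OF s2, of "of_real c"]]
      suminf_mult[OF s2, of "of_real c"] by simp
  also have "\<dots> = z * Mconf c z" unfolding key e3 ..
  finally show ?thesis .
qed

lemma Mconf_cont: "c \<ge> 0 \<Longrightarrow> isCont (Mconf c) z"
  using Mconf_deriv DERIV_isCont by blast

lemma Mconf_zero_exp: "Mconf 0 z = exp z"
proof -
  have "pochhammer (complex_of_real 0 + 1) n = of_real (fact n)" for n
    by (metis add_0 of_real_0 of_real_fact pochhammer_fact)
  then show ?thesis unfolding Mconf_def exp_def by (simp add: scaleR_conv_of_real divide_inverse mult.commute)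
qed


lemma ode_pos:
  fixes \<phi> \<phi>' :: "real \<Rightarrow> complex" and \<kappa> :: real and \<mu> :: complex
  assumes k: "\<kappa> \<ge> 0" and c0: "isCont \<phi> 0"
    and d: "\<And>t. t > 0 \<Longrightarrow> (\<phi> has_vector_derivative \<phi>' t) (at t)"
    and e: "\<And>t. t > 0 \<Longrightarrow> \<phi>' t + of_real \<kappa> * (\<phi> t - \<phi> 0) / of_real t = \<i> * \<mu> * \<phi> t"
    and t: "t > 0"
  shows "\<phi> t = \<phi> 0 * Mconf \<kappa> (\<i> * \<mu> * of_real t)"
proof -
  define G where "G s = Mconf \<kappa> (\<i> * \<mu> * of_real s)" for s
  define G' where "G' s = \<i> * \<mu> * Mder \<kappa> (\<i> * \<mu> * of_real s)" for s
  have Gd: "(G has_vector_derivative G' s) (at s)" for s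
  proof -
    have "((\<lambda>s. \<i> * \<mu> * of_real s) has_vector_derivative \<i> * \<mu>) (at s)"
      using has_vector_derivative_real_field[of "\<lambda>z. \<i> * \<mu> * z" "\<i> * \<mu>" s UNIV]
      by (auto intro!: derivative_eq_intros)
    from field_vector_diff_chain_at[OF this Mconf_deriv[OF k]]
    show ?thesis unfolding G_def G'_def by (simp add: o_def)
  qed
  have Geq: "G' s + of_real \<kappa> * (G s - 1) / of_real s = \<i> * \<mu> * G s" if "s > 0" for s
  proof -
    have "of_real s * G' s + of_real \<kappa> * (G s - 1) = of_real s * (\<i> * \<mu> * G s)"
      using Mconf_ident[OF k, of "\<i> * \<mu> * of_real s"] unfolding G_def G'_def
      by (simp add: algebra_simps)
    then show ?thesis using that by (simp add: field_simps)
  qed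
  define \<psi> where "\<psi> s = \<phi> s - \<phi> 0 * G s" for s
  have \<psi>d: "(\<psi> has_vector_derivative (\<phi>' s - \<phi> 0 * G' s)) (at s)" if "s > 0" for s
    unfolding \<psi>_def using d[OF that] Gd[of s]
    by (auto intro!: derivative_eq_intros)
  have \<psi>eq: "(\<phi>' s - \<phi> 0 * G' s) + of_real \<kappa> * \<psi> s / of_real s = \<i> * \<mu> * \<psi> s" if "s > 0" for s
  proof -
    have "(\<phi>' s - \<phi> 0 * G' s) + of_real \<kappa> * \<psi> s / of_real s
        = (\<phi>' s + of_real \<kappa> * (\<phi> s - \<phi> 0) / of_real s)
          - \<phi> 0 * (G' s + of_real \<kappa> * (G s - 1) / of_real s)"
    proof -
      have "of_real \<kappa> * \<psi> s / of_real s = of_real \<kappa> * (\<phi> s - \<phi> 0) / of_real s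
             - \<phi> 0 * (of_real \<kappa> * (G s - 1) / of_real s)"
        unfolding \<psi>_def by (simp add: algebra_simps diff_divide_distrib)
      then show ?thesis by (simp add: algebra_simps)
    qed
    also have "\<dots> = \<i> * \<mu> * \<psi> s" unfolding e[OF that] Geq[OF that] \<psi>_def
      by (simp add: algebra_simps)
    finally show ?thesis .
  qed
  define \<Phi> where "\<Phi> s = of_real (s powr \<kappa>) * exp (- \<i> * \<mu> * of_real s) * \<psi> s" for s
  have \<Phi>d: "(\<Phi> has_vector_derivative 0) (at s within {0<..})" if "s \<in> {0<..}" for s
  proof -
    from that have s: "s > 0" by simp
    have p: "((\<lambda>s. of_real (s powr \<kappa>)) has_vector_derivative of_real (\<kappa> * s powr (\<kappa> - 1))) (at s)"
      using s by (auto intro!: derivative_eq_intros)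
    have ex: "((\<lambda>s. exp (- \<i> * \<mu> * of_real s)) has_vector_derivative
               (- \<i> * \<mu>) * exp (- \<i> * \<mu> * of_real s)) (at s)"
    proof -
      have "((\<lambda>z. exp (- \<i> * \<mu> * z)) has_field_derivative (- \<i> * \<mu>) * exp (- \<i> * \<mu> * of_real s)) (at (of_real s))"
        by (auto intro!: derivative_eq_intros)
      from has_vector_derivative_real_field[OF this] show ?thesis by simp
    qed
    define E where "E = exp (- \<i> * \<mu> * of_real s)"
    define P where "P = complex_of_real (s powr \<kappa>)"
    have D: "(\<Phi> has_vector_derivative
      (P * E * (\<phi>' s - \<phi> 0 * G' s) + (P * ((- \<i> * \<mu>) * E) + of_real (\<kappa> * s powr (\<kappa> - 1)) * E) * \<psi> s)) (at s)"
      unfolding \<Phi>_def E_def P_def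
      by (rule has_vector_derivative_mult[OF has_vector_derivative_mult[OF p ex] \<psi>d[OF s]])
    have pw: "s powr (\<kappa> - 1) = s powr \<kappa> / s" using s by (simp add: powr_diff)
    have "P * E * (\<phi>' s - \<phi> 0 * G' s) + (P * ((- \<i> * \<mu>) * E) + of_real (\<kappa> * s powr (\<kappa> - 1)) * E) * \<psi> s
       = P * E * ((\<phi>' s - \<phi> 0 * G' s) + of_real \<kappa> * \<psi> s / of_real s - \<i> * \<mu> * \<psi> s)"
    proof -
      have h: "complex_of_real (\<kappa> * s powr (\<kappa> - 1)) = of_real \<kappa> * P / of_real s"
        unfolding pw P_def by simp
      show ?thesis unfolding h by (simp add: algebra_simps divide_inverse)
    qed
    also have "\<dots> = 0" using \<psi>eq[OF s] by simp
    finally have "P * E * (\<phi>' s - \<phi> 0 * G' s) + (P * ((- \<i> * \<mu>) * E) + of_real (\<kappa> * s powr (\<kappa> - 1)) * E) * \<psi> s = 0" .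
    with D have "(\<Phi> has_vector_derivative 0) (at s)" by simp
    then show ?thesis by (rule has_vector_derivative_at_within)
  qed
  obtain c where c: "\<And>s. s \<in> {0<..} \<Longrightarrow> \<Phi> s = c"
    using has_vector_derivative_zero_constant[of "{0<..}" \<Phi>] \<Phi>d by auto
  have lim1: "(\<Phi> \<longlongrightarrow> c) (at_right 0)"
  proof (rule Lim_transform_eventually[of "\<lambda>_. c"])
    show "\<forall>\<^sub>F x in at_right 0. c = \<Phi> x" using c eventually_at_right_less[of 0] 
      by (auto simp: eventually_at_filter)
  qed simp
  have \<psi>0: "(\<psi> \<longlongrightarrow> 0) (at_right 0)"
  proof -
    have "isCont (\<lambda>x. Mconf \<kappa> (\<i> * \<mu> * complex_of_real x)) 0"
      by (rule isCont_o2[where g="Mconf \<kappa>"]) (auto intro!: continuous_intros Mconf_cont[OF k])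
    then have "isCont \<psi> 0" unfolding \<psi>_def G_def
      using c0 by (auto intro!: continuous_intros)
    moreover have "\<psi> 0 = 0" unfolding \<psi>_def G_def by (simp add: Mconf_0)
    ultimately have "(\<psi> \<longlongrightarrow> 0) (at 0)" by (metis isCont_def)
    then show ?thesis by (rule filterlim_mono) (auto intro: at_within_le_at)
  qed
  have lim2: "(\<Phi> \<longlongrightarrow> 0) (at_right 0)"
  proof (rule Lim_null_comparison)
    show "\<forall>\<^sub>F s in at_right 0. norm (\<Phi> s) \<le> exp (norm \<mu>) * norm (\<psi> s)"
    proof -
      have "\<forall>\<^sub>F s in at_right 0. s \<in> {0<..<(1::real)}"
        by (rule eventually_at_right_real) simp
      then show ?thesis
      proof eventually_elim
        case (elim s)
        then have elim: "0 < s" "s < 1" by auto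
        have a: "s powr \<kappa> \<le> 1" using elim k powr_mono2[of \<kappa> s 1] by simp
        have b: "norm (exp (- \<i> * \<mu> * of_real s)) \<le> exp (norm \<mu>)"
        proof -
          have "norm (exp (- \<i> * \<mu> * of_real s)) = exp (Re (- \<i> * \<mu> * of_real s))"
            by (rule norm_exp_eq_Re)
          also have "\<dots> \<le> exp (norm \<mu>)"
          proof -
            have "Re (- \<i> * \<mu> * of_real s) = s * Im \<mu>" by simp
            also have "\<dots> \<le> s * \<bar>Im \<mu>\<bar>" using elim by (intro mult_left_mono) auto
            also have "\<dots> \<le> \<bar>Im \<mu>\<bar>" using elim by (intro mult_left_le_one_le) auto
            also have "\<dots> \<le> norm \<mu>" by (rule abs_Im_le_cmod)
            finally show ?thesis by simp
          qed
          finally show ?thesis .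
        qed
        have "norm (\<Phi> s) = s powr \<kappa> * norm (exp (- \<i> * \<mu> * of_real s)) * norm (\<psi> s)"
          unfolding \<Phi>_def using elim by (simp add: norm_mult)
        also have "\<dots> \<le> 1 * exp (norm \<mu>) * norm (\<psi> s)"
          using a b by (intro mult_mono) auto
        finally show ?case by simp
      qed
    qed
    show "((\<lambda>s. exp (norm \<mu>) * norm (\<psi> s)) \<longlongrightarrow> 0) (at_right 0)"
      using tendsto_mult[OF tendsto_const tendsto_norm[OF \<psi>0], of "exp (norm \<mu>)"] by simp
  qed
  have "c = 0" using tendsto_unique[OF _ lim1 lim2] by simp
  then have "\<Phi> t = 0" using c t by simp
  then have "\<psi> t = 0" unfolding \<Phi>_def using t by simp
  then show ?thesis unfolding \<psi>_def G_def by simp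
qed

lemma ode_unique:
  fixes \<phi> \<phi>' :: "real \<Rightarrow> complex" and \<kappa> :: real and \<mu> :: complex
  assumes k: "\<kappa> \<ge> 0" and c0: "isCont \<phi> 0"
    and d: "\<And>t. t \<noteq> 0 \<Longrightarrow> (\<phi> has_vector_derivative \<phi>' t) (at t)"
    and e: "\<And>t. t \<noteq> 0 \<Longrightarrow> \<phi>' t + of_real \<kappa> * (\<phi> t - \<phi> 0) / of_real t = \<i> * \<mu> * \<phi> t"
  shows "\<phi> t = \<phi> 0 * Mconf \<kappa> (\<i> * \<mu> * of_real t)"
proof -
  consider "t = 0" | "t > 0" | "t < 0" by linarith
  then show ?thesis
  proof cases
    case 1 then show ?thesis by (simp add: Mconf_0)
  next
    case 2 then show ?thesis using ode_pos[OF k c0 d e] by auto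
  next
    case 3
    define ch where "ch s = \<phi> (- s)" for s
    have "ch (- t) = ch 0 * Mconf \<kappa> (\<i> * (- \<mu>) * of_real (- t))"
    proof (rule ode_pos[OF k, where \<phi>' = "\<lambda>s. - \<phi>' (- s)"])
      have "isCont (\<lambda>s::real. - s) 0" by (intro continuous_intros)
      from isCont_o2[OF this, of \<phi>] c0 show "isCont ch 0" unfolding ch_def by simp
      show "(ch has_vector_derivative - \<phi>' (- s)) (at s)" if "s > 0" for s
      proof -
        have "((\<lambda>s. - s) has_vector_derivative (-1::real)) (at s)"
          by (auto intro!: derivative_eq_intros)
        from vector_diff_chain_at[OF this, of \<phi> "\<phi>' (- s)"] d[of "- s"] that
        show ?thesis unfolding ch_def by (simp add: o_def)
      qed
      show "- \<phi>' (- s) + of_real \<kappa> * (ch s - ch 0) / of_real s = \<i> * - \<mu> * ch s" if "s > 0" for s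
      proof -
        have h: "\<phi>' (-s) - of_real \<kappa> * (\<phi> (-s) - \<phi> 0) / of_real s = \<i> * \<mu> * \<phi> (-s)"
          using e[of "-s"] that by simp
        have "- \<phi>' (- s) + of_real \<kappa> * (ch s - ch 0) / of_real s
           = - (\<phi>' (-s) - of_real \<kappa> * (\<phi> (-s) - \<phi> 0) / of_real s)"
          unfolding ch_def by simp
        also have "\<dots> = \<i> * - \<mu> * ch s" unfolding h ch_def by simp
        finally show ?thesis .
      qed
    qed (use 3 in simp)
    then show ?thesis unfolding ch_def by simp
  qed
qed


definition deg :: "('n::finite \<Rightarrow> nat) \<Rightarrow> nat" where "deg \<alpha> = (\<Sum>i\<in>UNIV. \<alpha> i)"
definition monr :: "real ^ 'n::finite \<Rightarrow> ('n \<Rightarrow> nat) \<Rightarrow> real" where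
  "monr w \<alpha> = (\<Prod>i\<in>UNIV. (w $ i) ^ \<alpha> i)"

lemma finite_deg_le: "finite {\<alpha> :: 'n::finite \<Rightarrow> nat. deg \<alpha> \<le> k}"
proof (rule finite_subset)
  show "{\<alpha> :: 'n \<Rightarrow> nat. deg \<alpha> \<le> k} \<subseteq> PiE UNIV (\<lambda>_. {..k})"
  proof
    fix \<alpha> :: "'n \<Rightarrow> nat" assume "\<alpha> \<in> {\<alpha>. deg \<alpha> \<le> k}"
    then have "\<alpha> i \<le> k" for i unfolding deg_def
      using member_le_sum[of i UNIV \<alpha>] by auto
    then show "\<alpha> \<in> PiE UNIV (\<lambda>_. {..k})" by (auto simp: PiE_UNIV_domain)
  qed
  show "finite (PiE UNIV (\<lambda>_::'n. {..k}))" by (rule finite_PiE) auto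
qed

lemma finite_deg_less: "finite {\<alpha> :: 'n::finite \<Rightarrow> nat. deg \<alpha> < k}"
  by (rule finite_subset[OF _ finite_deg_le[of k]]) auto

lemma deg_0_iff: "deg (\<alpha>::'n::finite \<Rightarrow> nat) = 0 \<longleftrightarrow> \<alpha> = (\<lambda>_. 0)"
  unfolding deg_def by (auto simp: fun_eq_iff)

lemma monr_0 [simp]: "monr w (\<lambda>_. 0) = 1" by (simp add: monr_def)

lemma monr_const: "monr (\<chi> i. r) \<alpha> = r ^ deg \<alpha>"
  by (simp add: monr_def deg_def power_sum)

lemma monr_scale: "monr (t *\<^sub>R w) \<alpha> = t ^ deg \<alpha> * monr w \<alpha>"
  by (simp add: monr_def deg_def power_sum power_mult_distrib prod.distrib)

lemma local_rep:
  fixes f :: "real ^ 'n::finite \<Rightarrow> complex"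
  assumes "real_analytic_on f UNIV"
  shows "\<exists>\<rho>>0. \<exists>c S. (\<forall>w. (\<forall>i. \<bar>w $ i\<bar> \<le> \<rho>) \<longrightarrow>
           ((\<lambda>\<alpha>. c \<alpha> * complex_of_real (monr w \<alpha>)) has_sum f (a + w)) UNIV)
         \<and> ((\<lambda>\<alpha>. norm (c \<alpha>) * \<rho> ^ deg \<alpha>) has_sum S) UNIV"
proof -
  obtain r c where r: "r > 0" and c: "\<And>x. dist x a < r \<Longrightarrow>
      ((\<lambda>\<alpha>. c \<alpha> * complex_of_real (\<Prod>i\<in>UNIV. (x $ i - a $ i) ^ \<alpha> i)) has_sum f x) UNIV"
    using assms unfolding real_analytic_on_def by blast
  define \<rho> where "\<rho> = r / (2 * real CARD('n))"
  have \<rho>: "\<rho> > 0" unfolding \<rho>_def using r by simp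
  have rep: "((\<lambda>\<alpha>. c \<alpha> * complex_of_real (monr w \<alpha>)) has_sum f (a + w)) UNIV"
    if w: "\<forall>i. \<bar>w $ i\<bar> \<le> \<rho>" for w
  proof -
    have "norm w \<le> (\<Sum>i\<in>UNIV. \<bar>w $ i\<bar>)" by (rule norm_le_l1_cart)
    also have "\<dots> \<le> (\<Sum>i\<in>(UNIV::'n set). \<rho>)" using w by (intro sum_mono) auto
    also have "\<dots> = r / 2" unfolding \<rho>_def by simp
    finally have "dist (a + w) a < r" using r by (simp add: dist_norm)
    from c[OF this] show ?thesis by (simp add: monr_def)
  qed
  have "((\<lambda>\<alpha>. c \<alpha> * complex_of_real (monr (\<chi> i. \<rho>) \<alpha>)) summable_on UNIV)"
    using rep[of "\<chi> i. \<rho>"] \<rho> by (auto simp: summable_on_def)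
  then have "(\<lambda>\<alpha>. norm (c \<alpha> * complex_of_real (monr (\<chi> i. \<rho>) \<alpha>))) summable_on UNIV"
    by (simp add: summable_on_iff_abs_summable_on_complex)
  then have "(\<lambda>\<alpha>. norm (c \<alpha>) * \<rho> ^ deg \<alpha>) summable_on UNIV"
    using \<rho> by (simp add: monr_const norm_mult norm_power)
  then obtain S where "((\<lambda>\<alpha>. norm (c \<alpha>) * \<rho> ^ deg \<alpha>) has_sum S) UNIV"
    by (auto simp: summable_on_def)
  then show ?thesis using \<rho> rep by blast
qed

lemma tail_bound:
  fixes w :: "real ^ 'n::finite" and c :: "('n \<Rightarrow> nat) \<Rightarrow> complex"
  assumes \<rho>: "\<rho> > 0" and rep: "((\<lambda>\<alpha>. c \<alpha> * complex_of_real (monr w \<alpha>)) has_sum F) UNIV"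
    and S: "((\<lambda>\<alpha>. norm (c \<alpha>) * \<rho> ^ deg \<alpha>) has_sum S) UNIV"
    and w: "\<And>i. \<bar>w $ i\<bar> \<le> \<epsilon>" and e: "0 \<le> \<epsilon>" "\<epsilon> \<le> \<rho>"
  shows "norm (F - (\<Sum>\<alpha>\<in>{\<alpha>. deg \<alpha> < m}. c \<alpha> * complex_of_real (monr w \<alpha>))) \<le> (\<epsilon> / \<rho>) ^ m * S"
proof -
  let ?Y = "\<lambda>\<alpha>. c \<alpha> * complex_of_real (monr w \<alpha>)"
  let ?A = "{\<alpha>. deg \<alpha> < m}"
  have fin: "((\<lambda>\<alpha>. if \<alpha> \<in> ?A then ?Y \<alpha> else 0) has_sum (\<Sum>\<alpha>\<in>?A. ?Y \<alpha>)) UNIV"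
    by (rule has_sum_finite_neutralI[OF finite_deg_less]) auto
  have fin': "((\<lambda>\<alpha>. - (if \<alpha> \<in> ?A then ?Y \<alpha> else 0)) has_sum - (\<Sum>\<alpha>\<in>?A. ?Y \<alpha>)) UNIV"
    using fin by (simp add: has_sum_uminus)
  have T: "((\<lambda>\<alpha>. ?Y \<alpha> - (if \<alpha> \<in> ?A then ?Y \<alpha> else 0)) has_sum (F - (\<Sum>\<alpha>\<in>?A. ?Y \<alpha>))) UNIV"
    using has_sum_add[OF rep fin'] by simp
  have B: "((\<lambda>\<alpha>. (\<epsilon> / \<rho>) ^ m * (norm (c \<alpha>) * \<rho> ^ deg \<alpha>)) has_sum ((\<epsilon> / \<rho>) ^ m * S)) UNIV"
    by (rule has_sum_cmult_right[OF S])
  show ?thesis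
  proof (rule norm_infsum_le[OF T B])
    fix \<alpha> :: "'n \<Rightarrow> nat"
    show "norm (?Y \<alpha> - (if \<alpha> \<in> ?A then ?Y \<alpha> else 0)) \<le> (\<epsilon> / \<rho>) ^ m * (norm (c \<alpha>) * \<rho> ^ deg \<alpha>)"
    proof (cases "\<alpha> \<in> ?A")
      case True then show ?thesis using \<rho> e by simp
    next
      case False
      then have dm: "m \<le> deg \<alpha>" by simp
      have "norm (?Y \<alpha>) = norm (c \<alpha>) * \<bar>monr w \<alpha>\<bar>" by (simp add: norm_mult)
      also have "\<bar>monr w \<alpha>\<bar> \<le> \<epsilon> ^ deg \<alpha>"
      proof -
        have "\<bar>monr w \<alpha>\<bar> = (\<Prod>i\<in>UNIV. \<bar>w $ i\<bar> ^ \<alpha> i)" by (simp add: monr_def abs_prod power_abs)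
        also have "\<dots> \<le> (\<Prod>i\<in>UNIV. \<epsilon> ^ \<alpha> i)" using w by (intro prod_mono) (auto intro: power_mono)
        also have "\<dots> = \<epsilon> ^ deg \<alpha>" by (simp add: deg_def power_sum)
        finally show ?thesis .
      qed
      then have "norm (c \<alpha>) * \<bar>monr w \<alpha>\<bar> \<le> norm (c \<alpha>) * \<epsilon> ^ deg \<alpha>" by (intro mult_left_mono) auto
      also have "\<epsilon> ^ deg \<alpha> = (\<epsilon> / \<rho>) ^ deg \<alpha> * \<rho> ^ deg \<alpha>" using \<rho> by (simp add: power_divide)
      also have "(\<epsilon> / \<rho>) ^ deg \<alpha> \<le> (\<epsilon> / \<rho>) ^ m"
        using dm e \<rho> by (intro power_decreasing) auto
      then have "norm (c \<alpha>) * ((\<epsilon> / \<rho>) ^ deg \<alpha> * \<rho> ^ deg \<alpha>) \<le> norm (c \<alpha>) * ((\<epsilon> / \<rho>) ^ m * \<rho> ^ deg \<alpha>)"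
        using \<rho> by (intro mult_left_mono mult_right_mono) auto
      finally show ?thesis using False by (simp add: algebra_simps)
    qed
  qed
qed

lemma analytic_cont:
  fixes f :: "real ^ 'n::finite \<Rightarrow> complex"
  assumes "real_analytic_on f UNIV"
  shows "isCont f a"
proof -
  obtain \<rho> c S where \<rho>: "\<rho> > 0" and rep: "\<And>w. (\<forall>i. \<bar>w $ i\<bar> \<le> \<rho>) \<Longrightarrow>
           ((\<lambda>\<alpha>. c \<alpha> * complex_of_real (monr w \<alpha>)) has_sum f (a + w)) UNIV"
     and S: "((\<lambda>\<alpha>. norm (c \<alpha>) * \<rho> ^ deg \<alpha>) has_sum S) UNIV"
    using local_rep[OF assms, of a] by blast
  have S0: "S \<ge> 0" by (rule has_sum_nonneg[OF S]) (use \<rho> in simp)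
  have A1: "{\<alpha> :: 'n \<Rightarrow> nat. deg \<alpha> < 1} = {\<lambda>_. 0}" using deg_0_iff by auto
  have bd: "norm (f (a + w) - c (\<lambda>_. 0)) \<le> (\<epsilon> / \<rho>) * S"
    if "\<And>i. \<bar>w $ i\<bar> \<le> \<epsilon>" "0 \<le> \<epsilon>" "\<epsilon> \<le> \<rho>" for w \<epsilon>
  proof -
    have "\<forall>i. \<bar>w $ i\<bar> \<le> \<rho>" using that by (meson order_trans)
    from tail_bound[OF \<rho> rep[OF this] S that, of 1] show ?thesis unfolding A1 by auto
  qed
  have fa: "f a = c (\<lambda>_. 0)" using bd[of 0 0] \<rho> by simp
  show ?thesis unfolding continuous_at_eps_delta
  proof (intro allI impI)
    fix e :: real assume e: "e > 0"
    define d where "d = min \<rho> (e * \<rho> / (S + 1))"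
    have d: "d > 0" unfolding d_def using \<rho> e S0 by auto
    show "\<exists>d>0. \<forall>y. dist y a < d \<longrightarrow> dist (f y) (f a) < e"
    proof (intro exI[of _ d] conjI allI impI d)
      fix y assume y: "dist y a < d"
      define w where "w = y - a"
      have nw: "norm w < d" using y by (simp add: w_def dist_norm)
      have wi: "\<bar>w $ i\<bar> \<le> norm w" for i by (rule component_le_norm_cart)
      have "norm (f (a + w) - c (\<lambda>_. 0)) \<le> (norm w / \<rho>) * S"
        using nw wi d_def by (intro bd) auto
      also have "\<dots> \<le> (norm w / \<rho>) * (S + 1)" using \<rho> by (intro mult_left_mono) auto
      also have "\<dots> < e"
      proof -
        have "norm w < e * \<rho> / (S + 1)" using nw d_def by simp
        then have "norm w * (S + 1) < e * \<rho>" using S0 by (simp add: field_simps)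
        then show ?thesis using \<rho> S0 by (simp add: field_simps)
      qed
      finally show "dist (f y) (f a) < e" unfolding fa[symmetric] w_def dist_norm by simp
    qed
  qed
qed

lemma analytic_line_deriv0:
  fixes f :: "real ^ 'n::finite \<Rightarrow> complex"
  assumes "real_analytic_on f UNIV"
  shows "\<exists>D. ((\<lambda>t. f (a + t *\<^sub>R v)) has_vector_derivative D) (at 0)"
proof -
  obtain \<rho> c S where \<rho>: "\<rho> > 0" and rep: "\<And>w. (\<forall>i. \<bar>w $ i\<bar> \<le> \<rho>) \<Longrightarrow>
           ((\<lambda>\<alpha>. c \<alpha> * complex_of_real (monr w \<alpha>)) has_sum f (a + w)) UNIV"
     and S: "((\<lambda>\<alpha>. norm (c \<alpha>) * \<rho> ^ deg \<alpha>) has_sum S) UNIV"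
    using local_rep[OF assms, of a] by blast
  have S0: "S \<ge> 0" by (rule has_sum_nonneg[OF S]) (use \<rho> in simp)
  define K where "K = norm v"
  have K1: "K + 1 > 0" unfolding K_def by (simp add: add_nonneg_pos)
  define A where "A = {\<alpha> :: 'n \<Rightarrow> nat. deg \<alpha> < 2}"
  have finA: "finite A" unfolding A_def by (rule finite_deg_less)
  define L where "L = (\<Sum>\<alpha>\<in>A - {\<lambda>_. 0}. c \<alpha> * complex_of_real (monr v \<alpha>))"
  have sumA: "(\<Sum>\<alpha>\<in>A. c \<alpha> * complex_of_real (monr (t *\<^sub>R v) \<alpha>)) = c (\<lambda>_. 0) + of_real t * L" for t
  proof -
    have "(\<Sum>\<alpha>\<in>A. c \<alpha> * complex_of_real (monr (t *\<^sub>R v) \<alpha>))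
        = c (\<lambda>_. 0) * complex_of_real (monr (t *\<^sub>R v) (\<lambda>_. 0)) +
          (\<Sum>\<alpha>\<in>A - {\<lambda>_. 0}. c \<alpha> * complex_of_real (monr (t *\<^sub>R v) \<alpha>))"
      by (rule sum.remove[OF finA]) (simp add: A_def deg_def)
    also have "(\<Sum>\<alpha>\<in>A - {\<lambda>_. 0}. c \<alpha> * complex_of_real (monr (t *\<^sub>R v) \<alpha>))
        = (\<Sum>\<alpha>\<in>A - {\<lambda>_. 0}. of_real t * (c \<alpha> * complex_of_real (monr v \<alpha>)))"
    proof (rule sum.cong[OF refl])
      fix \<alpha> assume "\<alpha> \<in> A - {\<lambda>_. 0}"
      then have "deg \<alpha> = 1" using deg_0_iff[of \<alpha>] unfolding A_def by auto
      then show "c \<alpha> * complex_of_real (monr (t *\<^sub>R v) \<alpha>) = of_real t * (c \<alpha> * complex_of_real (monr v \<alpha>))"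
        by (simp add: monr_scale)
    qed
    finally show ?thesis by (simp add: L_def sum_distrib_left)
  qed
  have bd: "norm (f (a + t *\<^sub>R v) - (c (\<lambda>_. 0) + of_real t * L)) \<le> (\<bar>t\<bar> * K / \<rho>) ^ 2 * S"
    if t: "\<bar>t\<bar> * K \<le> \<rho>" for t
  proof -
    have wi: "\<bar>(t *\<^sub>R v) $ i\<bar> \<le> \<bar>t\<bar> * K" for i
      unfolding K_def using component_le_norm_cart[of v i] by (simp add: abs_mult mult_left_mono)
    have "\<forall>i. \<bar>(t *\<^sub>R v) $ i\<bar> \<le> \<rho>" using wi t order_trans by blast
    from tail_bound[OF \<rho> rep[OF this] S wi, of 2] t
    show ?thesis unfolding A_def[symmetric] sumA by (simp add: K_def)
  qed
  have fa: "f a = c (\<lambda>_. 0)" using bd[of 0] \<rho> by simp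
  have "((\<lambda>t. f (a + t *\<^sub>R v)) has_derivative (\<lambda>t. t *\<^sub>R L)) (at 0)"
    unfolding has_derivative_iff_norm
  proof (intro conjI)
    show "bounded_linear (\<lambda>t::real. t *\<^sub>R L)" by (rule bounded_linear_scaleR_left)
    show "((\<lambda>y. norm (f (a + y *\<^sub>R v) - f (a + 0 *\<^sub>R v) - (y - 0) *\<^sub>R L) / norm (y - 0)) \<longlongrightarrow> 0) (at 0)"
    proof (rule Lim_null_comparison)
      show "((\<lambda>y. \<bar>y\<bar> * (K ^ 2 * S / \<rho> ^ 2)) \<longlongrightarrow> 0) (at 0)"
        by (rule tendsto_eq_intros refl | simp)+
      show "\<forall>\<^sub>F y in at 0. norm (norm (f (a + y *\<^sub>R v) - f (a + 0 *\<^sub>R v) - (y - 0) *\<^sub>R L) / norm (y - 0))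
              \<le> \<bar>y\<bar> * (K ^ 2 * S / \<rho> ^ 2)"
        unfolding eventually_at
      proof (intro exI[of _ "\<rho> / (K + 1)"] conjI ballI impI)
        show "\<rho> / (K + 1) > 0" using \<rho> K1 by simp
        fix y :: real assume "y \<in> UNIV" and y: "y \<noteq> 0 \<and> dist y 0 < \<rho> / (K + 1)"
        have yK: "\<bar>y\<bar> * K \<le> \<rho>"
        proof -
          have "\<bar>y\<bar> < \<rho> / (K + 1)" using y by simp
          then have "\<bar>y\<bar> * (K + 1) < \<rho>" using K1 by (simp add: pos_less_divide_eq)
          then show ?thesis by (simp add: algebra_simps K_def)
        qed
        have "norm (f (a + y *\<^sub>R v) - f a - y *\<^sub>R L) \<le> (\<bar>y\<bar> * K / \<rho>) ^ 2 * S"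
          using bd[OF yK] by (simp add: fa scaleR_conv_of_real algebra_simps)
        then have "norm (f (a + y *\<^sub>R v) - f a - y *\<^sub>R L) / \<bar>y\<bar> \<le> (\<bar>y\<bar> * K / \<rho>) ^ 2 * S / \<bar>y\<bar>"
          by (intro divide_right_mono) auto
        also have "\<dots> = \<bar>y\<bar> * (K ^ 2 * S / \<rho> ^ 2)"
        proof -
          have "b \<noteq> 0 \<Longrightarrow> (b * K / \<rho>) ^ 2 * S / b = b * (K ^ 2 * S / \<rho> ^ 2)" for b
            by (simp add: power2_eq_square field_simps)
          then show ?thesis using y by simp
        qed
        finally show "norm (norm (f (a + y *\<^sub>R v) - f (a + 0 *\<^sub>R v) - (y - 0) *\<^sub>R L) / norm (y - 0))
              \<le> \<bar>y\<bar> * (K ^ 2 * S / \<rho> ^ 2)" by simp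
      qed
    qed
  qed
  then show ?thesis unfolding has_vector_derivative_def by blast
qed

lemma analytic_line_deriv:
  fixes f :: "real ^ 'n::finite \<Rightarrow> complex"
  assumes "real_analytic_on f UNIV"
  shows "\<exists>D. ((\<lambda>t. f (z + t *\<^sub>R v)) has_vector_derivative D) (at t0)"
proof -
  obtain D where D: "((\<lambda>t. f ((z + t0 *\<^sub>R v) + t *\<^sub>R v)) has_vector_derivative D) (at (t0 - t0))"
    using analytic_line_deriv0[OF assms, of "z + t0 *\<^sub>R v" v] by auto
  have "((\<lambda>t. t - t0) has_vector_derivative 1) (at t0)" by (auto intro!: derivative_eq_intros)
  from vector_diff_chain_at[OF this D] have
    "((\<lambda>t. f ((z + t0 *\<^sub>R v) + (t - t0) *\<^sub>R v)) has_vector_derivative D) (at t0)"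
    by (simp add: o_def)
  moreover have "(\<lambda>t. f ((z + t0 *\<^sub>R v) + (t - t0) *\<^sub>R v)) = (\<lambda>t. f (z + t *\<^sub>R v))"
    by (rule ext) (simp add: algebra_simps)
  ultimately show ?thesis by auto
qed


lemma rel_generic:
  fixes f :: "real ^ 'n::finite \<Rightarrow> complex" and a :: "real ^ 'n" and W :: "(real ^ 'n) set"
    and \<kappa> q :: real and \<mu> :: complex
  assumes cont: "\<And>x. isCont f x"
    and ld: "\<And>z v t0. \<exists>D. ((\<lambda>t. f (z + t *\<^sub>R v)) has_vector_derivative D) (at t0)"
    and q: "inner a a = q" "q > 0" and \<kappa>: "\<kappa> \<ge> 0"
    and Wl: "\<And>x t. x \<in> W \<Longrightarrow> t \<noteq> 0 \<Longrightarrow> (x - (inner x a / q) *\<^sub>R a) + t *\<^sub>R a \<in> W"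
    and eq: "\<And>z. z \<in> W \<Longrightarrow> dirderiv f a z + of_real \<kappa> * (f z - f (z - (inner z a / q) *\<^sub>R a))
               / of_real (inner z a / q) = \<i> * \<mu> * f z"
    and dense: "\<And>x. x \<in> closure W"
  shows "f x = f (x - (inner x a / q) *\<^sub>R a) * Mconf \<kappa> (\<i> * \<mu> * of_real (inner x a / q))"
proof -
  define g where "g x = f x - f (x - (inner x a / q) *\<^sub>R a) * Mconf \<kappa> (\<i> * \<mu> * of_real (inner x a / q))" for x
  have gW: "g x = 0" if xW: "x \<in> W" for x
  proof -
    define x' where "x' = x - (inner x a / q) *\<^sub>R a"
    have ix': "inner x' a = 0" unfolding x'_def using q by (simp add: inner_diff_left)
    define \<phi> where "\<phi> t = f (x' + t *\<^sub>R a)" for t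
    define \<phi>' where "\<phi>' t = dirderiv f a (x' + t *\<^sub>R a)" for t
    have c0: "isCont \<phi> 0" unfolding \<phi>_def
      by (rule isCont_o2[where g=f, OF _ cont]) (intro continuous_intros)
    have dd: "(\<phi> has_vector_derivative \<phi>' t) (at t)" for t
    proof -
      obtain D where D: "((\<lambda>s. f (x' + s *\<^sub>R a)) has_vector_derivative D) (at t)"
        using ld by blast
      have "((\<lambda>s. s + t) has_vector_derivative 1) (at 0)" by (auto intro!: derivative_eq_intros)
      from vector_diff_chain_at[OF this, of "\<lambda>s. f (x' + s *\<^sub>R a)" D] D
      have "((\<lambda>s. f ((x' + t *\<^sub>R a) + s *\<^sub>R a)) has_vector_derivative D) (at 0)"
        by (simp add: o_def algebra_simps)
      then have "\<phi>' t = D" unfolding \<phi>'_def dirderiv_def by (rule vector_derivative_at)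
      then show ?thesis using D unfolding \<phi>_def by simp
    qed
    have ee: "\<phi>' t + of_real \<kappa> * (\<phi> t - \<phi> 0) / of_real t = \<i> * \<mu> * \<phi> t" if t: "t \<noteq> 0" for t
    proof -
      define z where "z = x' + t *\<^sub>R a"
      have zW: "z \<in> W" unfolding z_def x'_def using Wl[OF xW t] .
      have iz: "inner z a / q = t" unfolding z_def using ix' q by (simp add: inner_add_left)
      have zz: "z - (inner z a / q) *\<^sub>R a = x'" by (subst iz) (simp add: z_def)
      have e: "dirderiv f a z + of_real \<kappa> * (f z - f x') / of_real t = \<i> * \<mu> * f z"
        using eq[OF zW] unfolding zz unfolding iz .
      show ?thesis using e by (simp add: \<phi>_def \<phi>'_def z_def)
    qed
    have "\<phi> (inner x a / q) = \<phi> 0 * Mconf \<kappa> (\<i> * \<mu> * of_real (inner x a / q))"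
      by (rule ode_unique[OF \<kappa> c0 dd ee])
    moreover have "\<phi> (inner x a / q) = f x" unfolding \<phi>_def x'_def by simp
    moreover have "\<phi> 0 = f (x - (inner x a / q) *\<^sub>R a)" unfolding \<phi>_def x'_def by simp
    ultimately show ?thesis unfolding g_def by simp
  qed
  have gc: "continuous_on (closure W) g"
  proof -
    have "isCont g x" for x
    proof -
      have c1: "isCont (\<lambda>x. f (x - (inner x a / q) *\<^sub>R a)) x"
        by (rule isCont_o2[where g=f, OF _ cont]) (use q in \<open>auto intro!: continuous_intros\<close>)
      have c2: "isCont (\<lambda>x. Mconf \<kappa> (\<i> * \<mu> * of_real (inner x a / q))) x"
        by (rule isCont_o2[where g="Mconf \<kappa>", OF _ Mconf_cont[OF \<kappa>]]) (use q in \<open>auto intro!: continuous_intros\<close>)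
      show ?thesis unfolding g_def by (intro continuous_intros cont c1 c2)
    qed
    then show ?thesis by (simp add: continuous_at_imp_continuous_on)
  qed
  have "g x = 0" by (rule continuous_constant_on_closure[OF gc gW dense])
  then show ?thesis unfolding g_def by simp
qed


definition cvec :: "real ^ 'n::finite \<Rightarrow> complex ^ 'n" where
  "cvec a = (\<chi> i. complex_of_real (a $ i))"

lemma inner_ebas: "inner x (ebas idx k) = x $ idx k"
  by (simp add: ebas_def inner_axis)

lemma ebas_comp: "ebas idx k $ i = (if i = idx k then 1 else 0)"
  by (simp add: ebas_def axis_def)

lemma T0: "T_real idx N km kp f 0 z = 0"
  by (simp add: T_real_def dirderiv_def)

lemma T_cvec: "T_cplx idx N km kp f (cvec a) z = T_real idx N km kp f a z"
proof -
  have "(\<chi> i. Re (cvec a $ i)) = a" "(\<chi> i. Im (cvec a $ i)) = 0"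
    by (simp_all add: cvec_def vec_eq_iff)
  then show ?thesis unfolding T_cplx_def by (simp add: T0)
qed

lemma dq_rescale: "of_real (c * 2) * ((A::complex) / of_real i) = of_real c * A / of_real (i / 2 :: real)"
  by (cases "i = 0") (simp_all add: field_simps)

locale coords =
  fixes idx :: "nat \<Rightarrow> 'n::finite" and N :: nat
  assumes bij: "bij_betw idx {1..N} (UNIV :: 'n set)"
begin

abbreviation "J \<equiv> {1..N div 2}"
abbreviation "am \<equiv> alpha_minus idx"
abbreviation "ap \<equiv> alpha_plus idx"

lemma idx_inj: "k \<in> {1..N} \<Longrightarrow> k' \<in> {1..N} \<Longrightarrow> idx k = idx k' \<longleftrightarrow> k = k'"
  using bij by (auto simp: bij_betw_def inj_on_eq_iff)

lemma idx_surj: "\<exists>k\<in>{1..N}. idx k = i"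
proof -
  have "i \<in> idx ` {1..N}" using bij by (simp add: bij_betw_def)
  then show ?thesis by blast
qed

lemma ebas_inner: "k \<in> {1..N} \<Longrightarrow> k' \<in> {1..N} \<Longrightarrow>
    inner (ebas idx k) (ebas idx k') = (if k = k' then 1 else 0)"
  by (simp add: ebas_def inner_axis_axis idx_inj)

lemma Jr: assumes "j \<in> J" shows "2*j - 1 \<in> {1..N}" "2*j \<in> {1..N}"
  using assms by auto

lemma ne1: "j \<in> J \<Longrightarrow> 2*j - 1 \<noteq> 2*j" by auto
lemma ne2: assumes "j \<in> J" "j' \<in> J" "j \<noteq> j'"
  shows "2*j - 1 \<noteq> 2*j' - 1" "2*j \<noteq> 2*j'" "2*j - 1 \<noteq> 2*j'" "2*j \<noteq> 2*j' - 1"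
  using assms by auto

lemma am_am: assumes "j \<in> J" "j' \<in> J"
  shows "inner (am j) (am j') = (if j = j' then 2 else 0)"
proof (cases "j = j'")
  case True
  then show ?thesis using Jr[OF assms(1)] ne1[OF assms(1)] by (simp add: alpha_minus_def inner_diff_left inner_diff_right ebas_inner)
next
  case False
  then show ?thesis using Jr[OF assms(1)] Jr[OF assms(2)] ne2[OF assms False] ne1[OF assms(1)]
    by (simp add: alpha_minus_def inner_diff_left inner_diff_right ebas_inner)
qed

lemma ap_ap: assumes "j \<in> J" "j' \<in> J"
  shows "inner (ap j) (ap j') = (if j = j' then 2 else 0)"
proof (cases "j = j'")
  case True
  then show ?thesis using Jr[OF assms(1)] ne1[OF assms(1)] by (simp add: alpha_plus_def inner_add_left inner_add_right ebas_inner)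
next
  case False
  then show ?thesis using Jr[OF assms(1)] Jr[OF assms(2)] ne2[OF assms False] ne1[OF assms(1)]
    by (simp add: alpha_plus_def inner_add_left inner_add_right ebas_inner)
qed

lemma am_ap: assumes "j \<in> J" "j' \<in> J"
  shows "inner (am j) (ap j') = 0"
proof (cases "j = j'")
  case True
  then show ?thesis using Jr[OF assms(1)] ne1[OF assms(1)] by (simp add: alpha_plus_def alpha_minus_def inner_add_right inner_diff_left ebas_inner)
next
  case False
  then show ?thesis using Jr[OF assms(1)] Jr[OF assms(2)] ne2[OF assms False] ne1[OF assms(1)]
    by (simp add: alpha_plus_def alpha_minus_def inner_add_right inner_diff_left ebas_inner)
qed

lemma ap_am: assumes "j \<in> J" "j' \<in> J"
  shows "inner (ap j) (am j') = 0"
  using am_ap[OF assms(2,1)] by (simp add: inner_commute)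

lemma am_eN: assumes "j \<in> J" "odd N" shows "inner (am j) (ebas idx N) = 0"
  using Jr[OF assms(1)] assms
  by (auto simp: alpha_minus_def inner_diff_left ebas_inner)

lemma ap_eN: assumes "j \<in> J" "odd N" shows "inner (ap j) (ebas idx N) = 0"
  using Jr[OF assms(1)] assms
  by (auto simp: alpha_plus_def inner_add_left ebas_inner)

lemma inner_am: "inner x (am j) = x $ idx (2*j-1) - x $ idx (2*j)"
  by (simp add: alpha_minus_def inner_diff_right inner_ebas)

lemma inner_ap: "inner x (ap j) = x $ idx (2*j-1) + x $ idx (2*j)"
  by (simp add: alpha_plus_def inner_add_right inner_ebas)

definition W :: "(real ^ 'n) set" where
  "W = {x. \<forall>j\<in>J. inner x (am j) \<noteq> 0 \<and> inner x (ap j) \<noteq> 0}"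

lemma ev_lin: "(c::real) \<noteq> 0 \<Longrightarrow> \<forall>\<^sub>F t in at 0. p + t * c \<noteq> 0"
proof -
  assume c: "c \<noteq> 0"
  have "\<forall>\<^sub>F t in at (0::real). t \<noteq> - p / c" by (rule eventually_neq_at_within)
  then show ?thesis
    by eventually_elim (use c in \<open>auto simp: field_simps\<close>)
qed

lemma W_dense: "x \<in> closure W"
proof -
  define d where "d = (\<Sum>j\<in>J. am j + 2 *\<^sub>R ap j)"
  have dm: "inner d (am j) = 2" if "j \<in> J" for j
  proof -
    have "inner d (am j) = (\<Sum>j'\<in>J. if j' = j then 2 else 0)"
      unfolding d_def inner_sum_left
      by (rule sum.cong) (use that in \<open>auto simp: inner_add_left am_am ap_am\<close>)
    then show ?thesis using that by simp
  qed
  have dp: "inner d (ap j) = 4" if "j \<in> J" for j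
  proof -
    have "inner d (ap j) = (\<Sum>j'\<in>J. if j' = j then 4 else 0)"
      unfolding d_def inner_sum_left
      by (rule sum.cong) (use that in \<open>auto simp: inner_add_left am_ap ap_ap\<close>)
    then show ?thesis using that by simp
  qed
  have ev: "\<forall>\<^sub>F t in at 0. x + t *\<^sub>R d \<in> W"
  proof -
    have "\<forall>\<^sub>F t in at 0. \<forall>j\<in>J. inner (x + t *\<^sub>R d) (am j) \<noteq> 0 \<and> inner (x + t *\<^sub>R d) (ap j) \<noteq> 0"
    proof (rule eventually_ball_finite)
      show "finite J" by simp
      show "\<forall>j\<in>J. \<forall>\<^sub>F t in at 0. inner (x + t *\<^sub>R d) (am j) \<noteq> 0 \<and> inner (x + t *\<^sub>R d) (ap j) \<noteq> 0"
      proof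
        fix j assume j: "j \<in> J"
        show "\<forall>\<^sub>F t in at 0. inner (x + t *\<^sub>R d) (am j) \<noteq> 0 \<and> inner (x + t *\<^sub>R d) (ap j) \<noteq> 0"
          using eventually_conj[OF ev_lin[of 2 "inner x (am j)"] ev_lin[of 4 "inner x (ap j)"]]
          by (simp add: inner_add_left dm[OF j] dp[OF j])
      qed
    qed
    then show ?thesis unfolding W_def by simp
  qed
  show ?thesis
  proof (rule Lim_in_closed_set[of "closure W" "\<lambda>t. x + t *\<^sub>R d" "at 0"])
    show "\<forall>\<^sub>F t in at 0. x + t *\<^sub>R d \<in> closure W"
      using ev by eventually_elim (use closure_subset in auto)
    show "((\<lambda>t. x + t *\<^sub>R d) \<longlongrightarrow> x) (at 0)"
    proof -
      have "((\<lambda>t. x + t *\<^sub>R d) \<longlongrightarrow> x + 0 *\<^sub>R d) (at 0)"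
        by (intro tendsto_intros)
      then show ?thesis by simp
    qed
  qed simp_all
qed

lemma T_am: assumes "j \<in> J"
  shows "T_real idx N km kp f (am j) z = dirderiv f (am j) z + of_real (km j * 2) * diffquot f (am j) z"
proof -
  have "(\<Sum>j'\<in>J. complex_of_real (km j' * inner (am j') (am j)) * diffquot f (am j') z
      + complex_of_real (kp j' * inner (ap j') (am j)) * diffquot f (ap j') z)
     = (\<Sum>j'\<in>J. if j' = j then of_real (km j * 2) * diffquot f (am j) z else 0)"
    by (rule sum.cong) (use assms in \<open>auto simp: am_am ap_am\<close>)
  then show ?thesis unfolding T_real_def using assms by simp
qed

lemma T_ap: assumes "j \<in> J"
  shows "T_real idx N km kp f (ap j) z = dirderiv f (ap j) z + of_real (kp j * 2) * diffquot f (ap j) z"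
proof -
  have "(\<Sum>j'\<in>J. complex_of_real (km j' * inner (am j') (ap j)) * diffquot f (am j') z
      + complex_of_real (kp j' * inner (ap j') (ap j)) * diffquot f (ap j') z)
     = (\<Sum>j'\<in>J. if j' = j then of_real (kp j * 2) * diffquot f (ap j) z else 0)"
    by (rule sum.cong) (use assms in \<open>auto simp: am_ap ap_ap\<close>)
  then show ?thesis unfolding T_real_def using assms by simp
qed

lemma T_eN: assumes "odd N"
  shows "T_real idx N km kp f (ebas idx N) z = dirderiv f (ebas idx N) z"
  unfolding T_real_def using assms by (simp add: am_eN ap_eN)

lemma cpair_cvec: "cpair lam (cvec a) = (\<Sum>i\<in>UNIV. lam $ i * of_real (a $ i))"
  by (simp add: cpair_def cvec_def)

lemma cpair_am: assumes "j \<in> J" shows "cpair lam (cvec (am j)) = lam $ idx (2*j-1) - lam $ idx (2*j)"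
proof -
  have ne: "idx (2*j-1) \<noteq> idx (2*j)" using Jr[OF assms] idx_inj by force
  have "cpair lam (cvec (am j)) = (\<Sum>i\<in>UNIV. (if i = idx (2*j-1) then lam $ i else 0) - (if i = idx (2*j) then lam $ i else 0))"
    unfolding cpair_cvec by (rule sum.cong) (auto simp: alpha_minus_def ebas_comp)
  also have "\<dots> = lam $ idx (2*j-1) - lam $ idx (2*j)" by (simp add: sum_subtractf)
  finally show ?thesis .
qed

lemma cpair_ap: assumes "j \<in> J" shows "cpair lam (cvec (ap j)) = lam $ idx (2*j-1) + lam $ idx (2*j)"
proof -
  have ne: "idx (2*j-1) \<noteq> idx (2*j)" using Jr[OF assms] idx_inj by force
  have "cpair lam (cvec (ap j)) = (\<Sum>i\<in>UNIV. (if i = idx (2*j-1) then lam $ i else 0) + (if i = idx (2*j) then lam $ i else 0))"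
    unfolding cpair_cvec by (rule sum.cong) (use ne in \<open>auto simp: alpha_plus_def ebas_comp\<close>)
  also have "\<dots> = lam $ idx (2*j-1) + lam $ idx (2*j)" by (simp add: sum.distrib)
  finally show ?thesis .
qed

lemma cpair_eN: "cpair lam (cvec (ebas idx k)) = lam $ idx k"
  unfolding cpair_cvec by (simp add: ebas_comp if_distrib cong: if_cong)

end

context coords begin

lemma rel_am:
  fixes f :: "real ^ 'n \<Rightarrow> complex"
  assumes cont: "\<And>x. isCont f x"
    and ld: "\<And>z v t0. \<exists>D. ((\<lambda>t. f (z + t *\<^sub>R v)) has_vector_derivative D) (at t0)"
    and se: "solves_eigen idx N km kp lam f" and j: "j \<in> J" and k: "km j \<ge> 0"
  shows "f x = f (x - (inner x (am j) / 2) *\<^sub>R am j) *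
     Mconf (km j) (\<i> * (lam $ idx (2*j-1) - lam $ idx (2*j)) * of_real (inner x (am j) / 2))"
proof (rule rel_generic[OF cont ld _ _ k _ _ W_dense])
  show "inner (am j) (am j) = 2" using am_am[OF j j] by simp
  show "(2::real) > 0" by simp
  show "x - (inner x (am j) / 2) *\<^sub>R am j + t *\<^sub>R am j \<in> W" if x: "x \<in> W" and t: "t \<noteq> 0" for x t
    unfolding W_def
  proof (intro CollectI ballI conjI)
    fix j' assume j': "j' \<in> J"
    have e1: "inner (x - (inner x (am j) / 2) *\<^sub>R am j + t *\<^sub>R am j) (am j') = (if j' = j then 2 * t else inner x (am j'))"
      using am_am[OF j j'] by (auto simp: inner_add_left inner_diff_left)
    have e2: "inner (x - (inner x (am j) / 2) *\<^sub>R am j + t *\<^sub>R am j) (ap j') = inner x (ap j')"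
      using am_ap[OF j j'] by (auto simp: inner_add_left inner_diff_left)
    show "inner (x - (inner x (am j) / 2) *\<^sub>R am j + t *\<^sub>R am j) (am j') \<noteq> 0"
      "inner (x - (inner x (am j) / 2) *\<^sub>R am j + t *\<^sub>R am j) (ap j') \<noteq> 0"
      using e1 e2 x j' t unfolding W_def by auto
  qed
  show "dirderiv f (am j) z + of_real (km j) * (f z - f (z - (inner z (am j) / 2) *\<^sub>R am j)) / of_real (inner z (am j) / 2)
      = \<i> * (lam $ idx (2*j-1) - lam $ idx (2*j)) * f z" if z: "z \<in> W" for z
  proof -
    have "T_cplx idx N km kp f (cvec (am j)) z = \<i> * cpair lam (cvec (am j)) * f z"
      using se z unfolding solves_eigen_def W_def by blast
    then show ?thesis
      unfolding T_cvec T_am[OF j] cpair_am[OF j] diffquot_def tau_def dq_rescale by simp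
  qed
qed

lemma rel_ap:
  fixes f :: "real ^ 'n \<Rightarrow> complex"
  assumes cont: "\<And>x. isCont f x"
    and ld: "\<And>z v t0. \<exists>D. ((\<lambda>t. f (z + t *\<^sub>R v)) has_vector_derivative D) (at t0)"
    and se: "solves_eigen idx N km kp lam f" and j: "j \<in> J" and k: "kp j \<ge> 0"
  shows "f x = f (x - (inner x (ap j) / 2) *\<^sub>R ap j) *
     Mconf (kp j) (\<i> * (lam $ idx (2*j-1) + lam $ idx (2*j)) * of_real (inner x (ap j) / 2))"
proof (rule rel_generic[OF cont ld _ _ k _ _ W_dense])
  show "inner (ap j) (ap j) = 2" using ap_ap[OF j j] by simp
  show "(2::real) > 0" by simp
  show "x - (inner x (ap j) / 2) *\<^sub>R ap j + t *\<^sub>R ap j \<in> W" if x: "x \<in> W" and t: "t \<noteq> 0" for x t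
    unfolding W_def
  proof (intro CollectI ballI conjI)
    fix j' assume j': "j' \<in> J"
    have e1: "inner (x - (inner x (ap j) / 2) *\<^sub>R ap j + t *\<^sub>R ap j) (ap j') = (if j' = j then 2 * t else inner x (ap j'))"
      using ap_ap[OF j j'] by (auto simp: inner_add_left inner_diff_left)
    have e2: "inner (x - (inner x (ap j) / 2) *\<^sub>R ap j + t *\<^sub>R ap j) (am j') = inner x (am j')"
      using ap_am[OF j j'] by (auto simp: inner_add_left inner_diff_left)
    show "inner (x - (inner x (ap j) / 2) *\<^sub>R ap j + t *\<^sub>R ap j) (am j') \<noteq> 0"
      "inner (x - (inner x (ap j) / 2) *\<^sub>R ap j + t *\<^sub>R ap j) (ap j') \<noteq> 0"
      using e1 e2 x j' t unfolding W_def by auto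
  qed
  show "dirderiv f (ap j) z + of_real (kp j) * (f z - f (z - (inner z (ap j) / 2) *\<^sub>R ap j)) / of_real (inner z (ap j) / 2)
      = \<i> * (lam $ idx (2*j-1) + lam $ idx (2*j)) * f z" if z: "z \<in> W" for z
  proof -
    have "T_cplx idx N km kp f (cvec (ap j)) z = \<i> * cpair lam (cvec (ap j)) * f z"
      using se z unfolding solves_eigen_def W_def by blast
    then show ?thesis
      unfolding T_cvec T_ap[OF j] cpair_ap[OF j] diffquot_def tau_def dq_rescale by simp
  qed
qed

lemma rel_eN:
  fixes f :: "real ^ 'n \<Rightarrow> complex"
  assumes cont: "\<And>x. isCont f x"
    and ld: "\<And>z v t0. \<exists>D. ((\<lambda>t. f (z + t *\<^sub>R v)) has_vector_derivative D) (at t0)"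
    and se: "solves_eigen idx N km kp lam f" and odd: "odd N"
  shows "f x = f (x - (inner x (ebas idx N) / 1) *\<^sub>R ebas idx N) *
     Mconf 0 (\<i> * lam $ idx N * of_real (inner x (ebas idx N) / 1))"
proof (rule rel_generic[OF cont ld _ _ _ _ _ W_dense])
  have N1: "N \<in> {1..N}" using odd by (cases N) auto
  show "inner (ebas idx N) (ebas idx N) = 1" using ebas_inner[OF N1 N1] by simp
  show "(1::real) > 0" by simp
  show "(0::real) \<le> 0" by simp
  show "x - (inner x (ebas idx N) / 1) *\<^sub>R ebas idx N + t *\<^sub>R ebas idx N \<in> W" if "x \<in> W" "t \<noteq> 0" for x t
    using that odd unfolding W_def
    by (auto simp: inner_add_left inner_diff_left inner_commute[of "ebas idx N"] am_eN ap_eN)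
  show "dirderiv f (ebas idx N) z + of_real 0 * (f z - f (z - (inner z (ebas idx N) / 1) *\<^sub>R ebas idx N)) / of_real (inner z (ebas idx N) / 1)
      = \<i> * lam $ idx N * f z" if z: "z \<in> W" for z
  proof -
    have "T_cplx idx N km kp f (cvec (ebas idx N)) z = \<i> * cpair lam (cvec (ebas idx N)) * f z"
      using se z unfolding solves_eigen_def W_def by blast
    then show ?thesis
      unfolding T_cvec T_eN[OF odd] cpair_eN by simp
  qed
qed

definition Q :: "nat \<Rightarrow> real ^ 'n \<Rightarrow> real ^ 'n" where
  "Q k x = x - (\<Sum>j=1..k. (inner x (am j) / 2) *\<^sub>R am j + (inner x (ap j) / 2) *\<^sub>R ap j)"

definition Pk :: "(nat \<Rightarrow> real) \<Rightarrow> (nat \<Rightarrow> real) \<Rightarrow> complex ^ 'n \<Rightarrow> nat \<Rightarrow> real ^ 'n \<Rightarrow> complex" where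
  "Pk km kp lam k x = (\<Prod>j=1..k.
        Mconf (km j) (\<i> / 2 * (lam $ idx (2*j-1) - lam $ idx (2*j))
                      * complex_of_real (x $ idx (2*j-1) - x $ idx (2*j)))
      * Mconf (kp j) (\<i> / 2 * (lam $ idx (2*j-1) + lam $ idx (2*j))
                      * complex_of_real (x $ idx (2*j-1) + x $ idx (2*j))))"

lemma Q_inner:
  assumes "k < j" "j \<in> J"
  shows "inner (Q k x) (am j) = inner x (am j)" "inner (Q k x) (ap j) = inner x (ap j)"
proof -
  have z1: "(\<Sum>j'=1..k. inner ((inner x (am j') / 2) *\<^sub>R am j' + (inner x (ap j') / 2) *\<^sub>R ap j') (am j)) = 0"
    by (rule sum.neutral) (use assms in \<open>auto simp: inner_add_left am_am ap_am\<close>)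
  have z2: "(\<Sum>j'=1..k. inner ((inner x (am j') / 2) *\<^sub>R am j' + (inner x (ap j') / 2) *\<^sub>R ap j') (ap j)) = 0"
    by (rule sum.neutral) (use assms in \<open>auto simp: inner_add_left am_ap ap_ap\<close>)
  show "inner (Q k x) (am j) = inner x (am j)" "inner (Q k x) (ap j) = inner x (ap j)"
    unfolding Q_def inner_diff_left inner_sum_left z1 z2 by simp_all
qed

lemma half_arg: "\<i> * (\<mu>::complex) * of_real (r / 2) = \<i> / 2 * \<mu> * of_real r"
  by (simp add: field_simps)

lemma product_rep:
  fixes f :: "real ^ 'n \<Rightarrow> complex"
  assumes cont: "\<And>x. isCont f x"
    and ld: "\<And>z v t0. \<exists>D. ((\<lambda>t. f (z + t *\<^sub>R v)) has_vector_derivative D) (at t0)"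
    and se: "solves_eigen idx N km kp lam f" and kpos: "\<forall>j\<in>J. km j > 0 \<and> kp j > 0"
  shows "k \<le> N div 2 \<Longrightarrow> f x = f (Q k x) * Pk km kp lam k x"
proof (induction k)
  case 0 then show ?case by (simp add: Q_def Pk_def)
next
  case (Suc k)
  define j where "j = Suc k"
  have j: "j \<in> J" using Suc.prems unfolding j_def by simp
  have kj: "km j \<ge> 0" and kj': "kp j \<ge> 0" using kpos j by (auto simp del: atLeastAtMost_iff)
  define y where "y = Q k x"
  define y' where "y' = y - (inner x (am j) / 2) *\<^sub>R am j"
  have iy: "inner y (am j) = inner x (am j)" "inner y (ap j) = inner x (ap j)"
    unfolding y_def using Q_inner[of k j x] j j_def by auto
  have iy': "inner y' (ap j) = inner x (ap j)"
    unfolding y'_def using iy j by (simp add: inner_diff_left am_ap)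
  have r1: "f y = f y' * Mconf (km j) (\<i> * (lam $ idx (2*j-1) - lam $ idx (2*j)) * of_real (inner x (am j) / 2))"
    using rel_am[OF cont ld se j kj, of y] unfolding y'_def iy by simp
  have r2: "f y' = f (y' - (inner x (ap j) / 2) *\<^sub>R ap j) * Mconf (kp j) (\<i> * (lam $ idx (2*j-1) + lam $ idx (2*j)) * of_real (inner x (ap j) / 2))"
    using rel_ap[OF cont ld se j kj', of y'] unfolding iy' by simp
  have qq: "y' - (inner x (ap j) / 2) *\<^sub>R ap j = Q (Suc k) x"
    unfolding y'_def y_def Q_def j_def by (simp add: algebra_simps)
  have pp: "Pk km kp lam (Suc k) x = Pk km kp lam k x *
     (Mconf (km j) (\<i> * (lam $ idx (2*j-1) - lam $ idx (2*j)) * of_real (inner x (am j) / 2)) *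
      Mconf (kp j) (\<i> * (lam $ idx (2*j-1) + lam $ idx (2*j)) * of_real (inner x (ap j) / 2)))"
    unfolding Pk_def j_def half_arg inner_am inner_ap by simp
  have "f x = f y * Pk km kp lam k x" using Suc by (simp add: y_def)
  then have "f x = f (Q (Suc k) x) *
      Mconf (kp j) (\<i> * (lam $ idx (2*j-1) + lam $ idx (2*j)) * of_real (inner x (ap j) / 2)) *
      Mconf (km j) (\<i> * (lam $ idx (2*j-1) - lam $ idx (2*j)) * of_real (inner x (am j) / 2)) *
      Pk km kp lam k x"
    unfolding r1 r2 qq by simp
  moreover have ac: "\<And>a b c d::complex. a * b * c * d = a * (d * (c * b))" by (simp add: ac_simps)
  ultimately show ?case unfolding pp by (simp only: ac)
qed

lemma h0_Q: "h0 idx N x = Q (N div 2) x"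
  by (simp add: h0_def Q_def)

lemma h0_orth: assumes "j \<in> J"
  shows "inner (h0 idx N x) (am j) = 0" "inner (h0 idx N x) (ap j) = 0"
proof -
  have z1: "(\<Sum>j'\<in>J. inner ((inner x (am j') / 2) *\<^sub>R am j' + (inner x (ap j') / 2) *\<^sub>R ap j') (am j))
      = (\<Sum>j'\<in>J. if j' = j then inner x (am j) else 0)"
    by (rule sum.cong) (use assms in \<open>auto simp: inner_add_left am_am ap_am\<close>)
  have z2: "(\<Sum>j'\<in>J. inner ((inner x (am j') / 2) *\<^sub>R am j' + (inner x (ap j') / 2) *\<^sub>R ap j') (ap j))
      = (\<Sum>j'\<in>J. if j' = j then inner x (ap j) else 0)"
    by (rule sum.cong) (use assms in \<open>auto simp: inner_add_left am_ap ap_ap\<close>)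
  show "inner (h0 idx N x) (am j) = 0" "inner (h0 idx N x) (ap j) = 0"
    unfolding h0_def inner_diff_left inner_sum_left z1 z2 using assms by simp_all
qed

lemma h0_comp: assumes "k \<in> {1..2 * (N div 2)}" shows "h0 idx N x $ idx k = 0"
proof -
  define j where "j = (k + 1) div 2"
  have j: "j \<in> J" using assms unfolding j_def by auto
  have k: "k = 2*j - 1 \<or> k = 2*j" using assms unfolding j_def by auto
  have "h0 idx N x $ idx (2*j-1) - h0 idx N x $ idx (2*j) = 0"
       "h0 idx N x $ idx (2*j-1) + h0 idx N x $ idx (2*j) = 0"
    using h0_orth[OF j, of x] unfolding inner_am inner_ap by auto
  then have "h0 idx N x $ idx (2*j-1) = 0" "h0 idx N x $ idx (2*j) = 0" by linarith+
  then show ?thesis using k by (elim disjE) simp_all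
qed

lemma uniqueness:
  fixes f :: "real ^ 'n \<Rightarrow> complex"
  assumes cont: "\<And>x. isCont f x"
    and ld: "\<And>z v t0. \<exists>D. ((\<lambda>t. f (z + t *\<^sub>R v)) has_vector_derivative D) (at t0)"
    and se: "solves_eigen idx N km kp lam f" and kpos: "\<forall>j\<in>J. km j > 0 \<and> kp j > 0"
    and f0: "f 0 = 1"
  shows "f x = Mkappa idx N km kp lam x"
proof -
  define y where "y = h0 idx N x"
  have fx: "f x = f y * Pk km kp lam (N div 2) x"
    using product_rep[OF cont ld se kpos, of "N div 2" x] unfolding y_def h0_Q by simp
  have mk: "Mkappa idx N km kp lam x = exp (\<i> * rpair lam y) * Pk km kp lam (N div 2) x"
    unfolding Mkappa_def Pk_def y_def ..
  have fy: "f y = exp (\<i> * rpair lam y)"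
  proof (cases "even N")
    case True
    have "y = 0"
    proof (subst vec_eq_iff, intro allI)
      fix i
      obtain k where k: "k \<in> {1..N}" "idx k = i" using idx_surj by blast
      have "k \<in> {1..2 * (N div 2)}" using k True by auto
      then show "y $ i = 0 $ i" using h0_comp k unfolding y_def by auto
    qed
    then show ?thesis using f0 by (simp add: rpair_def)
  next
    case False
    have yc: "y $ i = (if i = idx N then y $ idx N else 0)" for i
    proof -
      obtain k where k: "k \<in> {1..N}" "idx k = i" using idx_surj by blast
      show ?thesis
      proof (cases "k = N")
        case True then show ?thesis using k by simp
      next
        case kN: False
        then have "k \<in> {1..2 * (N div 2)}" using k False by auto
        moreover have "i \<noteq> idx N" using kN k idx_inj[of k N] by auto
        ultimately show ?thesis using h0_comp k unfolding y_def by auto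
      qed
    qed
    have y0: "y - (inner y (ebas idx N) / 1) *\<^sub>R ebas idx N = 0"
    proof (subst vec_eq_iff, intro allI)
      fix i show "(y - (inner y (ebas idx N) / 1) *\<^sub>R ebas idx N) $ i = 0 $ i"
        using yc[of i] by (simp add: inner_ebas ebas_comp)
    qed
    have "f y = f 0 * Mconf 0 (\<i> * lam $ idx N * of_real (y $ idx N))"
      using rel_eN[OF cont ld se False, of y] unfolding y0 by (simp add: inner_ebas)
    also have "rpair lam y = lam $ idx N * of_real (y $ idx N)"
    proof -
      have "rpair lam y = (\<Sum>i\<in>UNIV. if i = idx N then lam $ i * of_real (y $ idx N) else 0)"
        unfolding rpair_def by (rule sum.cong[OF refl]) (subst yc, simp)
      then show ?thesis by simp
    qed
    ultimately show ?thesis using f0 by (simp add: Mconf_zero_exp mult.assoc)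
  qed
  show ?thesis using fx mk fy by simp
qed

end

lemma rpair_cvec: "rpair lam a = cpair lam (cvec a)"
  by (simp add: rpair_def cpair_def cvec_def)

lemma rpair_add: "rpair lam (x + y) = rpair lam x + rpair lam y"
  by (simp add: rpair_def distrib_left sum.distrib)

lemma rpair_scale: "rpair lam (r *\<^sub>R x) = of_real r * rpair lam x"
  by (simp add: rpair_def sum_distrib_left algebra_simps)

lemma rpair_zero: "rpair lam 0 = 0"
  by (simp add: rpair_def)

lemma hd_comp_field:
  fixes g :: "complex \<Rightarrow> complex" and h :: "'a::real_normed_vector \<Rightarrow> complex"
  assumes "(g has_field_derivative g') (at (h x))" "bounded_linear h"
  shows "((\<lambda>x. g (h x)) has_derivative (\<lambda>v. g' * h v)) (at x)"
proof -
  have "(g has_derivative (*) g') (at (h x))" using assms(1) by (simp add: has_field_derivative_def)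
  from has_derivative_compose[OF bounded_linear_imp_has_derivative[OF assms(2)] this] show ?thesis by simp
qed

lemma bl_inner: "bounded_linear (\<lambda>x::real ^ 'n::finite. (a::complex) * of_real (inner x v))"
proof -
  have "linear (\<lambda>x::real ^ 'n. a * of_real (inner x v))"
  proof (rule linearI)
    fix x y :: "real ^ 'n" show "a * of_real (inner (x + y) v) = a * of_real (inner x v) + a * of_real (inner y v)"
      by (simp add: inner_add_left distrib_left)
  next
    fix c :: real and x :: "real ^ 'n"
    have "a * of_real (c * inner x v) = c *\<^sub>R (a * of_real (inner x v))" by (simp add: scaleR_conv_of_real)
    then show "a * of_real (inner (c *\<^sub>R x) v) = c *\<^sub>R (a * of_real (inner x v))"
      by (simp only: inner_scaleR_left)
  qed
  then show ?thesis by (simp add: linear_conv_bounded_linear)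
qed

context coords begin

definition Fc :: "(nat \<Rightarrow> real) \<Rightarrow> (nat \<Rightarrow> real) \<Rightarrow> complex ^ 'n \<Rightarrow> nat \<Rightarrow> real ^ 'n \<Rightarrow> complex" where
  "Fc km kp lam j x = Mconf (km j) (\<i> / 2 * (lam $ idx (2*j-1) - lam $ idx (2*j)) * of_real (inner x (am j)))
                    * Mconf (kp j) (\<i> / 2 * (lam $ idx (2*j-1) + lam $ idx (2*j)) * of_real (inner x (ap j)))"

lemma Mk_form: "Mkappa idx N km kp lam x = exp (\<i> * rpair lam (h0 idx N x)) * (\<Prod>j\<in>J. Fc km kp lam j x)"
  unfolding Mkappa_def Fc_def inner_am inner_ap ..

lemma h0_add: "h0 idx N (x + y) = h0 idx N x + h0 idx N y"
  by (simp add: h0_def inner_add_left scaleR_add_left add_divide_distrib sum.distrib algebra_simps)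

lemma h0_scale: "h0 idx N (r *\<^sub>R x) = r *\<^sub>R h0 idx N x"
  by (simp add: h0_def scaleR_diff_right scaleR_sum_right algebra_simps)

lemma h0_am: assumes "j \<in> J" shows "h0 idx N (am j) = 0"
proof -
  have "(\<Sum>j'\<in>J. (inner (am j) (am j') / 2) *\<^sub>R am j' + (inner (am j) (ap j') / 2) *\<^sub>R ap j')
      = (\<Sum>j'\<in>J. if j' = j then am j else 0)"
    by (rule sum.cong) (use assms in \<open>auto simp: am_am am_ap\<close>)
  then show ?thesis using assms by (simp add: h0_def)
qed

lemma h0_ap: assumes "j \<in> J" shows "h0 idx N (ap j) = 0"
proof -
  have "(\<Sum>j'\<in>J. (inner (ap j) (am j') / 2) *\<^sub>R am j' + (inner (ap j) (ap j') / 2) *\<^sub>R ap j')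
      = (\<Sum>j'\<in>J. if j' = j then ap j else 0)"
    by (rule sum.cong) (use assms in \<open>auto simp: ap_ap ap_am\<close>)
  then show ?thesis using assms by (simp add: h0_def)
qed

lemma h0_eN: assumes "odd N" shows "h0 idx N (ebas idx N) = ebas idx N"
proof -
  have "(\<Sum>j'\<in>J. (inner (ebas idx N) (am j') / 2) *\<^sub>R am j' + (inner (ebas idx N) (ap j') / 2) *\<^sub>R ap j') = 0"
    by (rule sum.neutral) (use assms in \<open>auto simp: inner_commute[of "ebas idx N"] am_eN ap_eN\<close>)
  then show ?thesis by (simp add: h0_def)
qed

lemma h0_even: assumes "even N" shows "h0 idx N x = 0"
proof (subst vec_eq_iff, intro allI)
  fix i
  obtain k where k: "k \<in> {1..N}" "idx k = i" using idx_surj by blast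
  have "k \<in> {1..2 * (N div 2)}" using k assms by auto
  then show "h0 idx N x $ i = 0 $ i" using h0_comp k by auto
qed

lemma h0_odd: assumes "odd N" shows "h0 idx N x = (h0 idx N x $ idx N) *\<^sub>R ebas idx N"
proof (subst vec_eq_iff, intro allI)
  fix i
  obtain k where k: "k \<in> {1..N}" "idx k = i" using idx_surj by blast
  show "h0 idx N x $ i = ((h0 idx N x $ idx N) *\<^sub>R ebas idx N) $ i"
  proof (cases "k = N")
    case True then show ?thesis using k by (simp add: ebas_comp)
  next
    case kN: False
    then have "k \<in> {1..2 * (N div 2)}" using k assms by auto
    moreover have "i \<noteq> idx N" using kN k idx_inj[of k N] by auto
    ultimately show ?thesis using h0_comp k by (auto simp: ebas_comp)
  qed
qed

lemma decomp: assumes "linear L"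
  shows "L \<eta> = L (h0 idx N \<eta>) + (\<Sum>j\<in>J. (inner \<eta> (am j) / 2) *\<^sub>R L (am j) + (inner \<eta> (ap j) / 2) *\<^sub>R L (ap j))"
proof -
  have "\<eta> = h0 idx N \<eta> + (\<Sum>j\<in>J. (inner \<eta> (am j) / 2) *\<^sub>R am j + (inner \<eta> (ap j) / 2) *\<^sub>R ap j)"
    by (simp add: h0_def)
  then have "L \<eta> = L (h0 idx N \<eta> + (\<Sum>j\<in>J. (inner \<eta> (am j) / 2) *\<^sub>R am j + (inner \<eta> (ap j) / 2) *\<^sub>R ap j))"
    by simp
  also have "\<dots> = L (h0 idx N \<eta>) + (\<Sum>j\<in>J. (inner \<eta> (am j) / 2) *\<^sub>R L (am j) + (inner \<eta> (ap j) / 2) *\<^sub>R L (ap j))"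
    using assms by (simp add: linear_add linear_sum linear_scale)
  finally show ?thesis .
qed

end

lemma alg1:
  fixes u k K F D c :: complex
  assumes u: "u \<noteq> 0" and I: "k * (F - 1) = c * u * (F - D)"
  shows "K * (2 * c * D) + (k * 2) * ((K * F - K) / u) = 2 * c * (K * F)"
proof -
  have e1: "(k * 2) * ((K * F - K) / u) = (2 * K) * (k * (F - 1)) / u"
    by (simp add: algebra_simps)
  also have "\<dots> = (2 * K) * (c * u * (F - D)) / u" by (simp only: I)
  also have "\<dots> = 2 * K * c * (F - D)" using u by (simp add: field_simps)
  finally have X: "(k * 2) * ((K * F - K) / u) = 2 * K * c * (F - D)" .
  show ?thesis unfolding X by (simp add: algebra_simps)
qed

context coords begin

lemma Fc_shift_other:
  assumes j: "j \<in> J" and j': "j' \<in> J" and ne: "j' \<noteq> j" and v: "v = am j \<or> v = ap j"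
  shows "Fc km kp lam j' (x + s *\<^sub>R v) = Fc km kp lam j' x"
proof -
  have "inner v (am j') = 0" "inner v (ap j') = 0"
    using v am_am[OF j j'] ap_ap[OF j j'] am_ap[OF j j'] ap_am[OF j j'] ne by auto
  then show ?thesis unfolding Fc_def by (simp add: inner_add_left)
qed

lemma line_am: assumes j: "j \<in> J"
  shows "\<exists>K. \<forall>s. Mkappa idx N km kp lam (x + s *\<^sub>R am j) =
     K * Mconf (km j) (\<i> / 2 * (lam $ idx (2*j-1) - lam $ idx (2*j)) * of_real (inner x (am j) + 2 * s))"
proof (intro exI allI)
  fix s
  have h: "h0 idx N (x + s *\<^sub>R am j) = h0 idx N x" by (simp add: h0_add h0_scale h0_am[OF j])
  have p: "(\<Prod>j'\<in>J. Fc km kp lam j' (x + s *\<^sub>R am j)) = Fc km kp lam j (x + s *\<^sub>R am j) * (\<Prod>j'\<in>J - {j}. Fc km kp lam j' x)"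
    by (subst prod.remove[OF _ j]) (auto intro!: prod.cong Fc_shift_other[OF j] simp del: atLeastAtMost_iff)
  have f: "Fc km kp lam j (x + s *\<^sub>R am j) = Mconf (km j) (\<i> / 2 * (lam $ idx (2*j-1) - lam $ idx (2*j)) * of_real (inner x (am j) + 2 * s))
     * Mconf (kp j) (\<i> / 2 * (lam $ idx (2*j-1) + lam $ idx (2*j)) * of_real (inner x (ap j)))"
    unfolding Fc_def using am_am[OF j j] am_ap[OF j j] by (simp add: inner_add_left ac_simps)
  show "Mkappa idx N km kp lam (x + s *\<^sub>R am j) =
     (exp (\<i> * rpair lam (h0 idx N x)) * Mconf (kp j) (\<i> / 2 * (lam $ idx (2*j-1) + lam $ idx (2*j)) * of_real (inner x (ap j)))
      * (\<Prod>j'\<in>J - {j}. Fc km kp lam j' x)) *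
     Mconf (km j) (\<i> / 2 * (lam $ idx (2*j-1) - lam $ idx (2*j)) * of_real (inner x (am j) + 2 * s))"
    unfolding Mk_form h p f by (simp only: ac_simps)
qed

lemma line_ap: assumes j: "j \<in> J"
  shows "\<exists>K. \<forall>s. Mkappa idx N km kp lam (x + s *\<^sub>R ap j) =
     K * Mconf (kp j) (\<i> / 2 * (lam $ idx (2*j-1) + lam $ idx (2*j)) * of_real (inner x (ap j) + 2 * s))"
proof (intro exI allI)
  fix s
  have h: "h0 idx N (x + s *\<^sub>R ap j) = h0 idx N x" by (simp add: h0_add h0_scale h0_ap[OF j])
  have p: "(\<Prod>j'\<in>J. Fc km kp lam j' (x + s *\<^sub>R ap j)) = Fc km kp lam j (x + s *\<^sub>R ap j) * (\<Prod>j'\<in>J - {j}. Fc km kp lam j' x)"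
    by (subst prod.remove[OF _ j]) (auto intro!: prod.cong Fc_shift_other[OF j] simp del: atLeastAtMost_iff)
  have f: "Fc km kp lam j (x + s *\<^sub>R ap j) = Mconf (km j) (\<i> / 2 * (lam $ idx (2*j-1) - lam $ idx (2*j)) * of_real (inner x (am j)))
     * Mconf (kp j) (\<i> / 2 * (lam $ idx (2*j-1) + lam $ idx (2*j)) * of_real (inner x (ap j) + 2 * s))"
    unfolding Fc_def using ap_ap[OF j j] ap_am[OF j j] by (simp add: inner_add_left ac_simps)
  show "Mkappa idx N km kp lam (x + s *\<^sub>R ap j) =
     (exp (\<i> * rpair lam (h0 idx N x)) * Mconf (km j) (\<i> / 2 * (lam $ idx (2*j-1) - lam $ idx (2*j)) * of_real (inner x (am j)))
      * (\<Prod>j'\<in>J - {j}. Fc km kp lam j' x)) *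
     Mconf (kp j) (\<i> / 2 * (lam $ idx (2*j-1) + lam $ idx (2*j)) * of_real (inner x (ap j) + 2 * s))"
    unfolding Mk_form h p f by (simp only: ac_simps)
qed

lemma eig_line:
  fixes M :: "real ^ 'n \<Rightarrow> complex" and a :: "real ^ 'n"
  assumes K: "\<And>s. M (x + s *\<^sub>R a) = K * Mconf \<kappa> (c * of_real (inner x a + 2 * s))"
    and \<kappa>: "\<kappa> \<ge> 0" and u: "inner x a \<noteq> 0" and aa: "inner a a = 2"
  shows "dirderiv M a x + of_real (\<kappa> * 2) * diffquot M a x = 2 * c * M x"
proof -
  define u where "u = inner x a"
  have inn: "((\<lambda>s. c * of_real (u + 2 * s)) has_vector_derivative c * of_real 2) (at 0)"
    by (auto intro!: derivative_eq_intros)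
  have ch: "((\<lambda>s. K * Mconf \<kappa> (c * of_real (u + 2 * s))) has_vector_derivative
      K * (c * of_real 2 * Mder \<kappa> (c * of_real u))) (at 0)"
    using has_vector_derivative_mult_right[OF field_vector_diff_chain_at[OF inn Mconf_deriv[OF \<kappa>]], of K]
    by (simp add: o_def)
  have dd: "dirderiv M a x = K * (c * 2 * Mder \<kappa> (c * of_real u))"
  proof -
    have "(\<lambda>s. M (x + s *\<^sub>R a)) = (\<lambda>s. K * Mconf \<kappa> (c * of_real (u + 2 * s)))"
      using K unfolding u_def by auto
    then show ?thesis unfolding dirderiv_def using vector_derivative_at[OF ch] by simp
  qed
  have Mx: "M x = K * Mconf \<kappa> (c * of_real u)" using K[of 0] unfolding u_def by simp
  have Mt: "M (tau a x) = K"
  proof -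
    have "tau a x = x + (- u / 2) *\<^sub>R a" unfolding tau_def u_def by simp
    then show ?thesis using K[of "- u / 2"] unfolding u_def by (simp add: Mconf_0)
  qed
  have I: "of_real \<kappa> * (Mconf \<kappa> (c * of_real u) - 1) = c * of_real u * (Mconf \<kappa> (c * of_real u) - Mder \<kappa> (c * of_real u))"
    using Mconf_ident[OF \<kappa>, of "c * of_real u"] by (simp add: algebra_simps)
  have "dirderiv M a x + of_real (\<kappa> * 2) * diffquot M a x
      = K * (2 * c * Mder \<kappa> (c * of_real u)) + (of_real \<kappa> * 2) * ((K * Mconf \<kappa> (c * of_real u) - K) / of_real u)"
    unfolding dd diffquot_def Mt Mx u_def[symmetric] by (simp add: algebra_simps)
  also have "\<dots> = 2 * c * (K * Mconf \<kappa> (c * of_real u))"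
    by (rule alg1) (use u I in \<open>simp_all add: u_def\<close>)
  finally show ?thesis unfolding Mx .
qed

lemma eig_am: assumes j: "j \<in> J" and k: "km j \<ge> 0" and u: "inner x (am j) \<noteq> 0"
  shows "T_real idx N km kp (Mkappa idx N km kp lam) (am j) x = \<i> * rpair lam (am j) * Mkappa idx N km kp lam x"
proof -
  obtain K where K: "\<And>s. Mkappa idx N km kp lam (x + s *\<^sub>R am j) =
     K * Mconf (km j) (\<i> / 2 * (lam $ idx (2*j-1) - lam $ idx (2*j)) * of_real (inner x (am j) + 2 * s))"
    using line_am[OF j] by blast
  have aa: "inner (am j) (am j) = 2" using am_am[OF j j] by simp
  show ?thesis unfolding T_am[OF j] eig_line[OF K k u aa] rpair_cvec cpair_am[OF j] by simp
qed

lemma eig_ap: assumes j: "j \<in> J" and k: "kp j \<ge> 0" and u: "inner x (ap j) \<noteq> 0"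
  shows "T_real idx N km kp (Mkappa idx N km kp lam) (ap j) x = \<i> * rpair lam (ap j) * Mkappa idx N km kp lam x"
proof -
  obtain K where K: "\<And>s. Mkappa idx N km kp lam (x + s *\<^sub>R ap j) =
     K * Mconf (kp j) (\<i> / 2 * (lam $ idx (2*j-1) + lam $ idx (2*j)) * of_real (inner x (ap j) + 2 * s))"
    using line_ap[OF j] by blast
  have aa: "inner (ap j) (ap j) = 2" using ap_ap[OF j j] by simp
  show ?thesis unfolding T_ap[OF j] eig_line[OF K k u aa] rpair_cvec cpair_ap[OF j] by simp
qed

lemma eig_eN: assumes odd: "odd N"
  shows "T_real idx N km kp (Mkappa idx N km kp lam) (ebas idx N) x = \<i> * rpair lam (ebas idx N) * Mkappa idx N km kp lam x"
proof -
  let ?M = "Mkappa idx N km kp lam"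
  have rl: "rpair lam (ebas idx N) = lam $ idx N" unfolding rpair_cvec cpair_eN ..
  have line: "?M (x + s *\<^sub>R ebas idx N) = exp (\<i> * lam $ idx N * of_real s) * ?M x" for s
  proof -
    have h: "h0 idx N (x + s *\<^sub>R ebas idx N) = h0 idx N x + s *\<^sub>R ebas idx N"
      by (simp add: h0_add h0_scale h0_eN[OF odd])
    have p: "Fc km kp lam j (x + s *\<^sub>R ebas idx N) = Fc km kp lam j x" if "j \<in> J" for j
      unfolding Fc_def using am_eN[OF that odd] ap_eN[OF that odd]
      by (simp add: inner_add_left inner_commute[of "ebas idx N"])
    show ?thesis unfolding Mk_form h rpair_add rpair_scale rl using p
      by (simp add: distrib_left exp_add algebra_simps)
  qed
  have ch: "((\<lambda>s. exp (\<i> * lam $ idx N * of_real s) * ?M x) has_vector_derivative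
        (\<i> * lam $ idx N) * ?M x) (at 0)"
  proof -
    have "((\<lambda>z. exp (\<i> * lam $ idx N * z)) has_field_derivative \<i> * lam $ idx N * exp (\<i> * lam $ idx N * of_real 0)) (at (of_real 0))"
      by (auto intro!: derivative_eq_intros)
    from has_vector_derivative_mult_left[OF has_vector_derivative_real_field[OF this], of "?M x"]
    show ?thesis by simp
  qed
  have "dirderiv ?M (ebas idx N) x = \<i> * lam $ idx N * ?M x"
    unfolding dirderiv_def line using vector_derivative_at[OF ch] by simp
  then show ?thesis unfolding T_eN[OF odd] rl .
qed

end

context coords begin

lemma E_bl: "bounded_linear (\<lambda>x. \<i> * rpair lam (h0 idx N x))"
proof -
  have "linear (\<lambda>x. \<i> * rpair lam (h0 idx N x))"
  proof (rule linearI)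
    fix x y show "\<i> * rpair lam (h0 idx N (x + y)) = \<i> * rpair lam (h0 idx N x) + \<i> * rpair lam (h0 idx N y)"
      by (simp add: h0_add rpair_add distrib_left)
  next
    fix c :: real and x
    show "\<i> * rpair lam (h0 idx N (c *\<^sub>R x)) = c *\<^sub>R (\<i> * rpair lam (h0 idx N x))"
      by (simp add: h0_scale rpair_scale scaleR_conv_of_real[where 'a=complex])
  qed
  then show ?thesis by (simp add: linear_conv_bounded_linear)
qed

lemma M_deriv:
  assumes kpos: "\<forall>j\<in>J. km j \<ge> 0 \<and> kp j \<ge> 0"
  shows "\<exists>D. (Mkappa idx N km kp lam has_derivative D) (at x)"
proof -
  have eq: "Mkappa idx N km kp lam = (\<lambda>x. exp (\<i> * rpair lam (h0 idx N x)) * (\<Prod>j\<in>J. Fc km kp lam j x))"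
    by (rule ext) (rule Mk_form)
  have e: "((\<lambda>x. exp (\<i> * rpair lam (h0 idx N x))) has_derivative
       (\<lambda>v. exp (\<i> * rpair lam (h0 idx N x)) * (\<i> * rpair lam (h0 idx N v)))) (at x)"
    by (rule hd_comp_field[OF DERIV_exp E_bl])
  have f: "\<exists>D. (Fc km kp lam j has_derivative D) (at x)" if j: "j \<in> J" for j
  proof -
    have k: "km j \<ge> 0" "kp j \<ge> 0" using kpos j by auto
    have a: "((\<lambda>x. Mconf (km j) (\<i> / 2 * (lam $ idx (2*j-1) - lam $ idx (2*j)) * of_real (inner x (am j)))) has_derivative
        (\<lambda>v. Mder (km j) (\<i> / 2 * (lam $ idx (2*j-1) - lam $ idx (2*j)) * of_real (inner x (am j)))
              * (\<i> / 2 * (lam $ idx (2*j-1) - lam $ idx (2*j)) * of_real (inner v (am j))))) (at x)"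
      by (rule hd_comp_field[OF Mconf_deriv[OF k(1)] bl_inner])
    have b: "((\<lambda>x. Mconf (kp j) (\<i> / 2 * (lam $ idx (2*j-1) + lam $ idx (2*j)) * of_real (inner x (ap j)))) has_derivative
        (\<lambda>v. Mder (kp j) (\<i> / 2 * (lam $ idx (2*j-1) + lam $ idx (2*j)) * of_real (inner x (ap j)))
              * (\<i> / 2 * (lam $ idx (2*j-1) + lam $ idx (2*j)) * of_real (inner v (ap j))))) (at x)"
      by (rule hd_comp_field[OF Mconf_deriv[OF k(2)] bl_inner])
    have "Fc km kp lam j = (\<lambda>x. Mconf (km j) (\<i> / 2 * (lam $ idx (2*j-1) - lam $ idx (2*j)) * of_real (inner x (am j)))
                    * Mconf (kp j) (\<i> / 2 * (lam $ idx (2*j-1) + lam $ idx (2*j)) * of_real (inner x (ap j))))"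
      by (rule ext) (simp add: Fc_def)
    then show ?thesis using has_derivative_mult[OF a b] by auto
  qed
  then obtain Df where Df: "\<And>j. j \<in> J \<Longrightarrow> (Fc km kp lam j has_derivative Df j) (at x)" by metis
  have p: "((\<lambda>x. \<Prod>j\<in>J. Fc km kp lam j x) has_derivative
     (\<lambda>y. \<Sum>i\<in>J. Df i y * (\<Prod>j\<in>J - {i}. Fc km kp lam j x))) (at x)"
    by (rule has_derivative_prod) (rule Df)
  show ?thesis unfolding eq using has_derivative_mult[OF e p] by blast
qed

lemma dirderiv_D:
  assumes D: "(M has_derivative D) (at x)"
  shows "dirderiv M \<xi> x = D \<xi>"
proof -
  have l: "((\<lambda>t. x + t *\<^sub>R \<xi>) has_derivative (\<lambda>t. t *\<^sub>R \<xi>)) (at 0)"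
    by (auto intro!: derivative_eq_intros)
  have D': "(M has_derivative D) (at (x + 0 *\<^sub>R \<xi>))" using D by simp
  have "((\<lambda>t. M (x + t *\<^sub>R \<xi>)) has_derivative (\<lambda>t. D (t *\<^sub>R \<xi>))) (at 0)"
    by (rule has_derivative_compose[OF l D'])
  moreover have "(\<lambda>t. D (t *\<^sub>R \<xi>)) = (\<lambda>t. t *\<^sub>R D \<xi>)"
    using has_derivative_bounded_linear[OF D] by (simp add: linear_scale bounded_linear.linear)
  ultimately have "((\<lambda>t. M (x + t *\<^sub>R \<xi>)) has_vector_derivative D \<xi>) (at 0)"
    unfolding has_vector_derivative_def by simp
  then show ?thesis unfolding dirderiv_def by (rule vector_derivative_at)
qed

lemma M_solves:
  assumes kpos: "\<forall>j\<in>J. km j \<ge> 0 \<and> kp j \<ge> 0"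
  shows "solves_eigen idx N km kp lam (Mkappa idx N km kp lam)"
proof -
  let ?M = "Mkappa idx N km kp lam"
  have real: "T_real idx N km kp ?M \<eta> x = \<i> * rpair lam \<eta> * ?M x" if xW: "x \<in> W" for \<eta> x
  proof -
    obtain D where D: "(?M has_derivative D) (at x)" using M_deriv[OF kpos] by blast
    have blD: "linear D" using has_derivative_bounded_linear[OF D] bounded_linear.linear by blast
    define L1 where "L1 \<eta> = T_real idx N km kp ?M \<eta> x" for \<eta>
    define L2 where "L2 \<eta> = \<i> * rpair lam \<eta> * ?M x" for \<eta>
    have L1e: "L1 \<eta> = D \<eta> + (\<Sum>j\<in>J. complex_of_real (km j * inner (am j) \<eta>) * diffquot ?M (am j) x
      + complex_of_real (kp j * inner (ap j) \<eta>) * diffquot ?M (ap j) x)" for \<eta>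
      unfolding L1_def T_real_def dirderiv_D[OF D] ..
    have lin1: "linear L1"
    proof (rule linearI)
      fix a b show "L1 (a + b) = L1 a + L1 b"
        unfolding L1e using linear_add[OF blD, of a b]
        by (simp add: inner_add_right distrib_left distrib_right sum.distrib algebra_simps)
    next
      fix c :: real and a
      show "L1 (c *\<^sub>R a) = c *\<^sub>R L1 a"
        unfolding L1e using linear_scale[OF blD, of c a]
        by (simp add: scaleR_conv_of_real[where 'a=complex] sum_distrib_left distrib_left algebra_simps)
    qed
    have lin2: "linear L2"
    proof (rule linearI)
      fix a b show "L2 (a + b) = L2 a + L2 b" unfolding L2_def by (simp add: rpair_add algebra_simps)
    next
      fix c :: real and a
      show "L2 (c *\<^sub>R a) = c *\<^sub>R L2 a"
        unfolding L2_def by (simp add: rpair_scale scaleR_conv_of_real[where 'a=complex])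
    qed
    have xam: "inner x (am j) \<noteq> 0" "inner x (ap j) \<noteq> 0" if "j \<in> J" for j
      using xW that unfolding W_def by auto
    have am: "L1 (am j) = L2 (am j)" if j: "j \<in> J" for j
      unfolding L1_def L2_def using eig_am[OF j _ xam(1)[OF j]] kpos j by auto
    have ap: "L1 (ap j) = L2 (ap j)" if j: "j \<in> J" for j
      unfolding L1_def L2_def using eig_ap[OF j _ xam(2)[OF j]] kpos j by auto
    have h: "L1 (h0 idx N \<eta>) = L2 (h0 idx N \<eta>)"
    proof (cases "even N")
      case True
      then show ?thesis using linear_0[OF lin1] linear_0[OF lin2] h0_even[OF True] by simp
    next
      case False
      have "L1 (ebas idx N) = L2 (ebas idx N)" unfolding L1_def L2_def using eig_eN[OF False] by simp
      then show ?thesis using h0_odd[OF False, of \<eta>] linear_scale[OF lin1] linear_scale[OF lin2] by metis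
    qed
    have "L1 \<eta> = L2 \<eta>"
      unfolding decomp[OF lin1, of \<eta>] decomp[OF lin2, of \<eta>] h
      by (intro arg_cong2[where f="(+)"] refl sum.cong) (simp_all add: am ap)
    then show ?thesis unfolding L1_def L2_def .
  qed
  show ?thesis unfolding solves_eigen_def
  proof (intro allI impI)
    fix \<xi> :: "complex ^ 'n" and x :: "real ^ 'n"
    assume "\<forall>j\<in>J. inner x (am j) \<noteq> 0 \<and> inner x (ap j) \<noteq> 0"
    then have xW: "x \<in> W" unfolding W_def by simp
    have cp: "cpair lam \<xi> = rpair lam (\<chi> i. Re (\<xi> $ i)) + \<i> * rpair lam (\<chi> i. Im (\<xi> $ i))"
    proof -
      have "cpair lam \<xi> = (\<Sum>i\<in>UNIV. lam $ i * of_real (Re (\<xi> $ i)) + \<i> * (lam $ i * of_real (Im (\<xi> $ i))))"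
        unfolding cpair_def
      proof (rule sum.cong[OF refl])
        fix i
        have "\<xi> $ i = of_real (Re (\<xi> $ i)) + \<i> * of_real (Im (\<xi> $ i))" by (simp add: complex_eq_iff)
        then show "lam $ i * \<xi> $ i = lam $ i * of_real (Re (\<xi> $ i)) + \<i> * (lam $ i * of_real (Im (\<xi> $ i)))"
          by (metis (no_types) distrib_left mult.left_commute)
      qed
      then show ?thesis by (simp add: rpair_def sum.distrib sum_distrib_left)
    qed
    show "T_cplx idx N km kp ?M \<xi> x = \<i> * cpair lam \<xi> * ?M x"
      unfolding T_cplx_def real[OF xW] cp by (simp add: algebra_simps)
  qed
qed

end

definition PS :: "(real ^ 'n::finite \<Rightarrow> complex) \<Rightarrow> real ^ 'n \<Rightarrow> bool" where
  "PS f a \<longleftrightarrow> (\<exists>r>0. \<exists>c. \<forall>x. dist x a < r \<longrightarrow>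
      ((\<lambda>\<alpha>. c \<alpha> * complex_of_real (monr (x - a) \<alpha>)) has_sum f x) UNIV)"

lemma PS_analytic: "(\<And>a. PS f a) \<Longrightarrow> real_analytic_on f UNIV"
  unfolding PS_def real_analytic_on_def monr_def by simp

definition madd :: "('n \<Rightarrow> nat) \<Rightarrow> ('n \<Rightarrow> nat) \<Rightarrow> ('n \<Rightarrow> nat)" where
  "madd \<alpha> \<beta> = (\<lambda>i. \<alpha> i + \<beta> i)"

lemma monr_add: "monr y (madd \<alpha> \<beta>) = monr y \<alpha> * monr y \<beta>"
  by (simp add: monr_def madd_def power_add prod.distrib)

lemma PS_const: "PS (\<lambda>x. k) a"
  unfolding PS_def
proof (intro exI[of _ 1] conjI allI impI exI[of _ "\<lambda>\<alpha>. if \<alpha> = (\<lambda>_. 0) then k else 0"])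
  fix x :: "real ^ 'a"
  show "((\<lambda>\<alpha>. (if \<alpha> = (\<lambda>_. 0) then k else 0) * complex_of_real (monr (x - a) \<alpha>)) has_sum k) UNIV"
    by (rule has_sum_finite_neutralI[of "{\<lambda>_. 0}"]) auto
qed simp

lemma finite_below: "finite {\<alpha> :: 'n::finite \<Rightarrow> nat. \<forall>i. \<alpha> i \<le> \<gamma> i}"
proof (rule finite_subset)
  show "{\<alpha> :: 'n \<Rightarrow> nat. \<forall>i. \<alpha> i \<le> \<gamma> i} \<subseteq> PiE UNIV (\<lambda>i. {..\<gamma> i})"
    by (auto simp: PiE_UNIV_domain)
  show "finite (PiE UNIV (\<lambda>i::'n. {..\<gamma> i}))" by (rule finite_PiE) auto
qed

lemma finite_fib: "finite {p :: ('n::finite \<Rightarrow> nat) \<times> ('n \<Rightarrow> nat). madd (fst p) (snd p) = \<gamma>}"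
proof (rule finite_subset)
  show "{p :: ('n \<Rightarrow> nat) \<times> ('n \<Rightarrow> nat). madd (fst p) (snd p) = \<gamma>} \<subseteq>
        {\<alpha>. \<forall>i. \<alpha> i \<le> \<gamma> i} \<times> {\<alpha>. \<forall>i. \<alpha> i \<le> \<gamma> i}"
    by (auto simp: madd_def)
  show "finite ({\<alpha> :: 'n \<Rightarrow> nat. \<forall>i. \<alpha> i \<le> \<gamma> i} \<times> {\<alpha>. \<forall>i. \<alpha> i \<le> \<gamma> i})"
    using finite_below by blast
qed

lemma has_sum_prod_family:
  fixes f g :: "'a \<Rightarrow> complex"
  assumes f: "(f has_sum F) UNIV" and g: "(g has_sum G) UNIV"
  shows "((\<lambda>(a, b). f a * g b) has_sum (F * G)) (UNIV \<times> UNIV)"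
proof -
  have fa: "(\<lambda>a. norm (f a)) summable_on UNIV"
    using f summable_on_iff_abs_summable_on_complex by (auto simp: summable_on_def)
  have ga: "(\<lambda>a. norm (g a)) summable_on UNIV"
    using g summable_on_iff_abs_summable_on_complex by (auto simp: summable_on_def)
  obtain NG where NG: "((\<lambda>a. norm (g a)) has_sum NG) UNIV" using ga by (auto simp: summable_on_def)
  have "(\<lambda>p. norm (f (fst p) * g (snd p))) summable_on Sigma UNIV (\<lambda>_. UNIV)"
  proof (rule summable_on_SigmaI[where g="\<lambda>a. norm (f a) * NG"])
    show "((\<lambda>b. norm (f (fst (a, b)) * g (snd (a, b)))) has_sum norm (f a) * NG) UNIV" if "a \<in> UNIV" for a
      using has_sum_cmult_right[OF NG, of "norm (f a)"] by (simp add: norm_mult)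
    show "(\<lambda>a. norm (f a) * NG) summable_on UNIV" by (rule summable_on_cmult_left[OF fa])
  qed auto
  then have s: "(\<lambda>p. f (fst p) * g (snd p)) summable_on Sigma UNIV (\<lambda>_. UNIV)"
    by (rule abs_summable_summable)
  have "((\<lambda>p. f (fst p) * g (snd p)) has_sum F * G) (Sigma UNIV (\<lambda>_. UNIV))"
  proof (rule has_sum_SigmaI[where g="\<lambda>a. f a * G"])
    show "((\<lambda>b. f (fst (a, b)) * g (snd (a, b))) has_sum f a * G) UNIV" if "a \<in> UNIV" for a
      using has_sum_cmult_right[OF g, of "f a"] by simp
    show "((\<lambda>a. f a * G) has_sum F * G) UNIV" by (rule has_sum_cmult_left[OF f])
  qed (rule s)
  then show ?thesis by (simp add: case_prod_unfold)
qed

lemma PS_mult: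
  fixes f g :: "real ^ 'n::finite \<Rightarrow> complex"
  assumes f: "PS f a" and g: "PS g a"
  shows "PS (\<lambda>x. f x * g x) a"
proof -
  obtain r1 c1 where r1: "r1 > 0" and c1: "\<And>x. dist x a < r1 \<Longrightarrow>
      ((\<lambda>\<alpha>. c1 \<alpha> * complex_of_real (monr (x - a) \<alpha>)) has_sum f x) UNIV"
    using f unfolding PS_def by blast
  obtain r2 c2 where r2: "r2 > 0" and c2: "\<And>x. dist x a < r2 \<Longrightarrow>
      ((\<lambda>\<alpha>. c2 \<alpha> * complex_of_real (monr (x - a) \<alpha>)) has_sum g x) UNIV"
    using g unfolding PS_def by blast
  define Fib where "Fib \<gamma> = {p :: ('n \<Rightarrow> nat) \<times> ('n \<Rightarrow> nat). madd (fst p) (snd p) = \<gamma>}" for \<gamma>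
  define c where "c \<gamma> = (\<Sum>p\<in>Fib \<gamma>. c1 (fst p) * c2 (snd p))" for \<gamma>
  show ?thesis unfolding PS_def
  proof (intro exI[of _ "min r1 r2"] conjI exI[of _ c] allI impI)
    show "min r1 r2 > 0" using r1 r2 by simp
    fix x assume x: "dist x a < min r1 r2"
    define Y where "Y \<alpha> = complex_of_real (monr (x - a) \<alpha>)" for \<alpha>
    have Yadd: "Y (madd \<alpha> \<beta>) = Y \<alpha> * Y \<beta>" for \<alpha> \<beta> unfolding Y_def by (simp add: monr_add)
    have P: "((\<lambda>(\<alpha>, \<beta>). (c1 \<alpha> * Y \<alpha>) * (c2 \<beta> * Y \<beta>)) has_sum (f x * g x)) (UNIV \<times> UNIV)"
      using has_sum_prod_family[OF c1 c2] x unfolding Y_def by auto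
    define h where "h p = (madd (fst p) (snd p), p)" for p :: "('n \<Rightarrow> nat) \<times> ('n \<Rightarrow> nat)"
    define G where "G q = c1 (fst (snd q)) * c2 (snd (snd q)) * Y (fst q)"
      for q :: "('n \<Rightarrow> nat) \<times> ('n \<Rightarrow> nat) \<times> ('n \<Rightarrow> nat)"
    have inj: "inj_on h (UNIV \<times> UNIV)" unfolding h_def by (auto simp: inj_on_def)
    have img: "h ` (UNIV \<times> UNIV) = Sigma UNIV Fib"
      unfolding h_def Fib_def by (auto simp: image_iff)
    have "((G \<circ> h) has_sum (f x * g x)) (UNIV \<times> UNIV)"
    proof -
      have "(G \<circ> h) = (\<lambda>(\<alpha>, \<beta>). (c1 \<alpha> * Y \<alpha>) * (c2 \<beta> * Y \<beta>))"
        by (auto simp: G_def h_def Yadd fun_eq_iff)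
      then show ?thesis using P by simp
    qed
    then have S: "(G has_sum (f x * g x)) (Sigma UNIV Fib)"
      using has_sum_reindex[OF inj, of G] img by simp
    have "((\<lambda>\<gamma>. c \<gamma> * Y \<gamma>) has_sum (f x * g x)) UNIV"
    proof (rule has_sum_SigmaD[OF S])
      fix \<gamma> :: "'n \<Rightarrow> nat" assume "\<gamma> \<in> UNIV"
      have fin: "finite (Fib \<gamma>)" unfolding Fib_def by (rule finite_fib)
      show "((\<lambda>p. G (\<gamma>, p)) has_sum c \<gamma> * Y \<gamma>) (Fib \<gamma>)"
        by (rule has_sum_finiteI[OF fin]) (simp add: G_def c_def sum_distrib_right)
    qed
    then show "((\<lambda>\<alpha>. c \<alpha> * complex_of_real (monr (x - a) \<alpha>)) has_sum f x * g x) UNIV"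
      unfolding Y_def .
  qed
qed

lemma PS_prod:
  assumes "finite S" "\<And>i. i \<in> S \<Longrightarrow> PS (f i) a"
  shows "PS (\<lambda>x. \<Prod>i\<in>S. f i x) a"
  using assms
proof (induction S rule: finite_induct)
  case empty then show ?case by (simp add: PS_const)
next
  case (insert i S)
  then show ?case by (simp add: PS_mult)
qed


lemma monr_pq:
  assumes "p \<noteq> q"
  shows "monr y (\<lambda>i. if i = p then m else if i = q then n else 0) = (y $ p) ^ m * (y $ q) ^ n"
proof -
  have "monr y (\<lambda>i. if i = p then m else if i = q then n else 0)
      = (\<Prod>i\<in>UNIV. (if i = p then (y $ p) ^ m else 1) * (if i = q then (y $ q) ^ n else 1))"
    unfolding monr_def by (rule prod.cong) (use assms in auto)
  also have "\<dots> = (y $ p) ^ m * (y $ q) ^ n" by (simp add: prod.distrib)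
  finally show ?thesis .
qed

lemma entire_taylor:
  fixes g :: "complex \<Rightarrow> complex"
  assumes hol: "g holomorphic_on UNIV"
  shows "(\<lambda>k. (deriv ^^ k) g s0 / fact k * z ^ k) sums g (s0 + z)"
proof -
  have "g holomorphic_on ball s0 (norm z + 1)" using hol holomorphic_on_subset by blast
  then have "\<forall>w\<in>ball s0 (norm z + 1). (\<lambda>n. (deriv ^^ n) g s0 / fact n * (w - s0) ^ n) sums g w"
    by (simp add: holomorphic_iff_power_series)
  moreover have "s0 + z \<in> ball s0 (norm z + 1)" by (simp add: dist_norm)
  ultimately show ?thesis by force
qed

lemma entire_abs:
  fixes g :: "complex \<Rightarrow> complex"
  assumes hol: "g holomorphic_on UNIV" and R: "R \<ge> 0"
  shows "summable (\<lambda>k. norm ((deriv ^^ k) g s0 / fact k) * R ^ k)"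
proof -
  have "summable (\<lambda>k. (deriv ^^ k) g s0 / fact k * (of_real (R + 1)) ^ k)"
    using entire_taylor[OF hol, of s0 "of_real (R + 1)"] by (rule sums_summable)
  from powser_insidea[OF this, of "of_real R"] R
  show ?thesis by (simp add: norm_mult norm_power norm_divide)
qed

lemma PS_lin2:
  fixes g :: "complex \<Rightarrow> complex" and p q :: "'n::finite"
  assumes hol: "g holomorphic_on UNIV" and pq: "p \<noteq> q"
  shows "PS (\<lambda>x::real ^ 'n. g (b + wp * of_real (x $ p) + wq * of_real (x $ q))) a"
proof -
  define s0 where "s0 = b + wp * of_real (a $ p) + wq * of_real (a $ q)"
  define h where "h k = (deriv ^^ k) g s0 / fact k" for k
  define Supp where "Supp = {\<alpha> :: 'n \<Rightarrow> nat. \<forall>i. i \<noteq> p \<longrightarrow> i \<noteq> q \<longrightarrow> \<alpha> i = 0}"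
  define c where "c \<alpha> = (if \<alpha> \<in> Supp then h (\<alpha> p + \<alpha> q) * of_nat ((\<alpha> p + \<alpha> q) choose \<alpha> p) * wp ^ (\<alpha> p) * wq ^ (\<alpha> q) else 0)" for \<alpha>
  define \<phi> where "\<phi> kl = (\<lambda>i. if i = p then snd kl else if i = q then fst kl - snd kl else 0)" for kl :: "nat \<times> nat"
  define Sig where "Sig = Sigma (UNIV :: nat set) (\<lambda>k. {..k})"
  show ?thesis unfolding PS_def
  proof (intro exI[of _ 1] conjI exI[of _ c] allI impI)
    fix x :: "real ^ 'n"
    define u where "u = x $ p - a $ p"
    define v where "v = x $ q - a $ q"
    define z where "z = wp * of_real u + wq * of_real v"
    have gz: "g (b + wp * of_real (x $ p) + wq * of_real (x $ q)) = g (s0 + z)"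
      unfolding s0_def z_def u_def v_def by (simp add: algebra_simps)
    define T where "T kl = h (fst kl) * (of_nat (fst kl choose snd kl) * (wp * of_real u) ^ snd kl * (wq * of_real v) ^ (fst kl - snd kl))" for kl
    define A where "A = norm (wp * of_real u)"
    define B where "B = norm (wq * of_real v)"
    have inner: "((\<lambda>l. T (k, l)) has_sum h k * z ^ k) {..k}" for k
    proof (rule has_sum_finiteI)
      show "finite {..k}" by simp
      show "h k * z ^ k = (\<Sum>l\<le>k. T (k, l))"
        unfolding T_def z_def binomial_ring by (simp add: sum_distrib_left)
    qed
    have outer: "((\<lambda>k. h k * z ^ k) has_sum g (s0 + z)) UNIV"
    proof (rule norm_summable_imp_has_sum)
      show "(\<lambda>k. h k * z ^ k) sums g (s0 + z)" unfolding h_def by (rule entire_taylor[OF hol])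
      show "summable (\<lambda>k. norm (h k * z ^ k))"
        using entire_abs[OF hol, of "norm z" s0] unfolding h_def by (simp add: norm_mult norm_power norm_divide)
    qed
    have absT: "(\<lambda>kl. norm (T kl)) summable_on Sig"
      unfolding Sig_def
    proof (rule summable_on_SigmaI[where g="\<lambda>k. norm (h k) * (A + B) ^ k"])
      show "((\<lambda>l. norm (T (k, l))) has_sum norm (h k) * (A + B) ^ k) {..k}" if "k \<in> UNIV" for k
      proof (rule has_sum_finiteI)
        show "finite {..k}" by simp
        show "norm (h k) * (A + B) ^ k = (\<Sum>l\<le>k. norm (T (k, l)))"
          unfolding T_def A_def B_def binomial_ring
          by (simp add: sum_distrib_left norm_mult norm_power mult.assoc)
      qed
      have "summable (\<lambda>k. norm (h k) * (A + B) ^ k)"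
        using entire_abs[OF hol, of "A + B" s0] unfolding h_def A_def B_def by simp
      then show "(\<lambda>k. norm (h k) * (A + B) ^ k) summable_on UNIV"
        by (intro norm_summable_imp_summable_on) (simp add: A_def B_def)
    qed auto
    have S: "(T has_sum g (s0 + z)) Sig"
      unfolding Sig_def
    proof (rule has_sum_SigmaI[where g="\<lambda>k. h k * z ^ k"])
      show "((\<lambda>l. T (k, l)) has_sum h k * z ^ k) {..k}" if "k \<in> UNIV" for k by (rule inner)
      show "((\<lambda>k. h k * z ^ k) has_sum g (s0 + z)) UNIV" by (rule outer)
      show "T summable_on Sigma UNIV (\<lambda>k. {..k})" using absT unfolding Sig_def by (rule abs_summable_summable)
    qed
    have inj: "inj_on \<phi> Sig"
    proof (rule inj_onI)
      fix kl kl' assume kl: "kl \<in> Sig" and kl': "kl' \<in> Sig" and e: "\<phi> kl = \<phi> kl'"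
      have "\<phi> kl p = \<phi> kl' p" "\<phi> kl q = \<phi> kl' q" using e by auto
      then have "snd kl = snd kl'" "fst kl - snd kl = fst kl' - snd kl'" using pq unfolding \<phi>_def by auto
      moreover have "snd kl \<le> fst kl" "snd kl' \<le> fst kl'" using kl kl' unfolding Sig_def by auto
      ultimately have "fst kl = fst kl'" "snd kl = snd kl'" by arith+
      then show "kl = kl'" by (simp add: prod_eq_iff)
    qed
    have img: "\<phi> ` Sig = Supp"
    proof
      show "\<phi> ` Sig \<subseteq> Supp" unfolding Supp_def \<phi>_def by auto
      show "Supp \<subseteq> \<phi> ` Sig"
      proof
        fix \<alpha> assume \<alpha>: "\<alpha> \<in> Supp"
        have "\<alpha> = \<phi> (\<alpha> p + \<alpha> q, \<alpha> p)" using \<alpha> pq unfolding Supp_def \<phi>_def by (auto simp: fun_eq_iff)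
        moreover have "(\<alpha> p + \<alpha> q, \<alpha> p) \<in> Sig" unfolding Sig_def by auto
        ultimately show "\<alpha> \<in> \<phi> ` Sig" by blast
      qed
    qed
    define F where "F \<alpha> = c \<alpha> * complex_of_real (monr (x - a) \<alpha>)" for \<alpha>
    have FT: "(F \<circ> \<phi>) kl = T kl" if kls: "kl \<in> Sig" for kl
    proof -
      obtain k l where kl: "kl = (k, l)" and lk: "l \<le> k" using kls unfolding Sig_def by (cases kl) auto
      have in_supp: "\<phi> (k, l) \<in> Supp" unfolding Supp_def \<phi>_def by auto
      have p1: "\<phi> (k, l) p = l" "\<phi> (k, l) q = k - l" using pq unfolding \<phi>_def by auto
      have m: "monr (x - a) (\<phi> (k, l)) = u ^ l * v ^ (k - l)"
      proof -
        have phi: "\<phi> (k, l) = (\<lambda>i. if i = p then l else if i = q then k - l else 0)"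
          unfolding \<phi>_def by (simp only: fst_conv snd_conv)
        show ?thesis unfolding phi using monr_pq[OF pq, of "x - a" l "k - l"] by (simp add: u_def v_def)
      qed
      show ?thesis unfolding kl F_def c_def T_def using in_supp lk
        by (simp add: p1 m power_mult_distrib)
    qed
    have "((F \<circ> \<phi>) has_sum g (s0 + z)) Sig"
      using S by (rule has_sum_cong[THEN iffD2, rotated]) (use FT in auto)
    then have "(F has_sum g (s0 + z)) Supp"
      using has_sum_reindex[OF inj, of F] img by simp
    then have "(F has_sum g (s0 + z)) UNIV"
      by (rule has_sum_cong_neutral[THEN iffD1, rotated -1]) (auto simp: F_def c_def)
    then show "((\<lambda>\<alpha>. c \<alpha> * complex_of_real (monr (x - a) \<alpha>)) has_sum g (b + wp * of_real (x $ p) + wq * of_real (x $ q))) UNIV"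
      unfolding gz F_def .
  qed simp
qed


lemma Mconf_hol: "c \<ge> 0 \<Longrightarrow> Mconf c holomorphic_on UNIV"
  unfolding holomorphic_on_def field_differentiable_def
  using Mconf_deriv has_field_derivative_at_within by blast

context coords begin

lemma h0_N: assumes "odd N" shows "h0 idx N x $ idx N = x $ idx N"
proof -
  have z: "(\<Sum>j\<in>J. inner ((inner x (am j) / 2) *\<^sub>R am j + (inner x (ap j) / 2) *\<^sub>R ap j) (ebas idx N)) = 0"
    by (rule sum.neutral) (use assms in \<open>auto simp: inner_add_left am_eN ap_eN\<close>)
  have "inner (h0 idx N x) (ebas idx N) = inner x (ebas idx N)"
    unfolding h0_def inner_diff_left inner_sum_left z by simp
  then show ?thesis by (simp add: inner_ebas)
qed

lemma M_analytic:
  assumes kpos: "\<forall>j\<in>J. km j \<ge> 0 \<and> kp j \<ge> 0" and N2: "N \<ge> 2"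
  shows "real_analytic_on (Mkappa idx N km kp lam) UNIV"
proof (rule PS_analytic)
  fix a
  have E: "PS (\<lambda>x. exp (\<i> * rpair lam (h0 idx N x))) a"
  proof (cases "even N")
    case True
    then have "(\<lambda>x. exp (\<i> * rpair lam (h0 idx N x))) = (\<lambda>x. 1)"
      by (simp add: h0_even rpair_zero)
    then show ?thesis by (simp add: PS_const)
  next
    case False
    have ne: "idx N \<noteq> idx 1" using idx_inj[of N 1] N2 by auto
    have eqE: "(\<lambda>x. exp (\<i> * rpair lam (h0 idx N x))) =
          (\<lambda>x. exp (0 + (\<i> * lam $ idx N) * of_real (x $ idx N) + 0 * of_real (x $ idx 1)))"
    proof (rule ext)
      fix x
      have r: "rpair lam (ebas idx N) = lam $ idx N" by (simp only: rpair_cvec cpair_eN)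
      have "rpair lam (h0 idx N x) = rpair lam ((x $ idx N) *\<^sub>R ebas idx N)"
        using h0_odd[OF False, of x] h0_N[OF False, of x] by simp
      also have "\<dots> = of_real (x $ idx N) * lam $ idx N" by (simp only: rpair_scale r)
      finally have "rpair lam (h0 idx N x) = of_real (x $ idx N) * lam $ idx N" .
      then show "exp (\<i> * rpair lam (h0 idx N x)) = exp (0 + (\<i> * lam $ idx N) * of_real (x $ idx N) + 0 * of_real (x $ idx 1))"
        by (simp add: ac_simps)
    qed
    show ?thesis unfolding eqE by (rule PS_lin2[OF holomorphic_on_exp ne])
  qed
  have P: "PS (\<lambda>x. \<Prod>j\<in>J.
        Mconf (km j) (\<i> / 2 * (lam $ idx (2*j-1) - lam $ idx (2*j)) * complex_of_real (x $ idx (2*j-1) - x $ idx (2*j)))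
      * Mconf (kp j) (\<i> / 2 * (lam $ idx (2*j-1) + lam $ idx (2*j)) * complex_of_real (x $ idx (2*j-1) + x $ idx (2*j)))) a"
  proof (rule PS_prod)
    fix j assume j: "j \<in> J"
    have ne: "idx (2*j-1) \<noteq> idx (2*j)" using Jr[OF j] idx_inj ne1[OF j] by blast
    have k: "km j \<ge> 0" "kp j \<ge> 0" using kpos j by auto
    define c where "c = \<i> / 2 * (lam $ idx (2*j-1) - lam $ idx (2*j))"
    define d where "d = \<i> / 2 * (lam $ idx (2*j-1) + lam $ idx (2*j))"
    have A: "PS (\<lambda>x. Mconf (km j) (0 + c * of_real (x $ idx (2*j-1)) + (- c) * of_real (x $ idx (2*j)))) a"
      by (rule PS_lin2[OF Mconf_hol[OF k(1)] ne])
    have B: "PS (\<lambda>x. Mconf (kp j) (0 + d * of_real (x $ idx (2*j-1)) + d * of_real (x $ idx (2*j)))) a"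
      by (rule PS_lin2[OF Mconf_hol[OF k(2)] ne])
    have "PS (\<lambda>x. Mconf (km j) (0 + c * of_real (x $ idx (2*j-1)) + (- c) * of_real (x $ idx (2*j)))
                 * Mconf (kp j) (0 + d * of_real (x $ idx (2*j-1)) + d * of_real (x $ idx (2*j)))) a"
      by (rule PS_mult[OF A B])
    then show "PS (\<lambda>x. Mconf (km j) (\<i> / 2 * (lam $ idx (2*j-1) - lam $ idx (2*j)) * complex_of_real (x $ idx (2*j-1) - x $ idx (2*j)))
      * Mconf (kp j) (\<i> / 2 * (lam $ idx (2*j-1) + lam $ idx (2*j)) * complex_of_real (x $ idx (2*j-1) + x $ idx (2*j)))) a"
      unfolding c_def d_def by (simp add: algebra_simps)
  qed simp
  show "PS (Mkappa idx N km kp lam) a"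
    unfolding Mkappa_def[abs_def] by (rule PS_mult[OF E P])
qed

end

theorem proposition6p2:
  fixes idx :: "nat \<Rightarrow> 'n::finite" and N :: nat
    and km kp :: "nat \<Rightarrow> real" and lam :: "complex ^ 'n"
  assumes "bij_betw idx {1..N} (UNIV :: 'n set)"
    and "N \<ge> 2"
    and "\<forall>j\<in>{1..N div 2}. km j > 0 \<and> kp j > 0"
  shows "{f. real_analytic_on f UNIV \<and> solves_eigen idx N km kp lam f \<and> f 0 = 1}
           = {Mkappa idx N km kp lam}"
proof -
  interpret coords idx N by unfold_locales (rule assms(1))
  have k0: "\<forall>j\<in>{1..N div 2}. km j \<ge> 0 \<and> kp j \<ge> 0" using assms(3) by (auto simp del: atLeastAtMost_iff)
  show ?thesis
  proof (rule set_eqI, rule iffI)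
    fix f assume "f \<in> {f. real_analytic_on f UNIV \<and> solves_eigen idx N km kp lam f \<and> f 0 = 1}"
    then have an: "real_analytic_on f UNIV" and se: "solves_eigen idx N km kp lam f" and f0: "f 0 = 1" by auto
    have "f = Mkappa idx N km kp lam"
    proof (rule ext)
      fix x show "f x = Mkappa idx N km kp lam x"
        by (rule uniqueness[OF analytic_cont[OF an] analytic_line_deriv[OF an] se assms(3) f0])
    qed
    then show "f \<in> {Mkappa idx N km kp lam}" by simp
  next
    fix f assume "f \<in> {Mkappa idx N km kp lam}"
    then have f: "f = Mkappa idx N km kp lam" by simp
    have "Mkappa idx N km kp lam 0 = 1"
    proof -
      have "h0 idx N 0 = 0" by (simp add: h0_def)
      then show ?thesis by (simp add: Mkappa_def rpair_zero Mconf_0)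
    qed
    then show "f \<in> {f. real_analytic_on f UNIV \<and> solves_eigen idx N km kp lam f \<and> f 0 = 1}"
      using f M_analytic[OF k0 assms(2)] M_solves[OF k0] by simp
  qed
qed


end
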